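(* For $n\ge 1$ let $Y_n$ be the random variable with \[ \mathbb{P}(Y_n=m)=\frac{[t^nx^m]H(t,x)}{[t^n]H(t,1)}. \] Then $Y_n/(2n)$ converges in law, with convergence of all moments, to a random variable $Y$ with the $\mathrm{Beta}(1,2)$ distribution, i.e. with density $f_Y(y)=2(1-y)$ for $y\in[0,1]$ and $0$ otherwise; its moments are $\mathbb{E}(Y^r)=\frac{2}{(r+1)(r+2)}$.
   Context: A bicolored Dyck path is a finite sequence of steps from $\{U_1,U_2,D\}$ ($U_1,U_2$ raise the height by $1$, $D$ lowers it by $1$) starting and ending at height $0$ and never going below height $0$; its length is its number of steps. Let $h_{n,m}$ be the number of pairs $(P,m)$ where $P$ is a bicolored Dyck path of length $2n$ with exactly one $U_2$ step, this being the $p$-th step of $P$, and $1\le m\le p$. Set $H(t,x)=\sum_{n,m}h_{n,m}t^nx^m$. (Equivalently, $Y_n$ is the value in the unique bottom-row cell of a uniformly random tableau with walls and holes of type $(n,n-1,1)$.) *)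

theory Defs
  imports "HOL-Probability.Probability"
begin

text \<open>Steps of a bicolored Dyck path.\<close>
datatype bstep = U1 | U2 | D

fun stepval :: "bstep \<Rightarrow> int" where
  "stepval U1 = 1" | "stepval U2 = 1" | "stepval D = -1"

definition height :: "bstep list \<Rightarrow> int" where
  "height P = (\<Sum>s\<leftarrow>P. stepval s)"

definition bic_dyck :: "bstep list \<Rightarrow> bool" where
  "bic_dyck P \<longleftrightarrow> height P = 0 \<and> (\<forall>k \<le> length P. height (take k P) \<ge> 0)"

text \<open>h n m = number of pairs (P,m) where P is a bicolored Dyck path of length 2n with exactly
  one U2 step, this being the p-th step (1-indexed), and 1 \<le> m \<le> p.
  (These are the coefficients [t^n x^m] H(t,x).)\<close>
definition hcoef :: "nat \<Rightarrow> nat \<Rightarrow> nat" where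
  "hcoef n m = card {P. length P = 2 * n \<and> bic_dyck P \<and> length (filter (\<lambda>s. s = U2) P) = 1 \<and>
      (\<exists>p. 1 \<le> p \<and> p \<le> length P \<and> P ! (p - 1) = U2 \<and> 1 \<le> m \<and> m \<le> p)}"

text \<open>[t^n] H(t,1) = \<Sum>_m h n m.\<close>
definition htot :: "nat \<Rightarrow> nat" where
  "htot n = (\<Sum>m\<le>2 * n. hcoef n m)"

definition Ylaw :: "nat \<Rightarrow> nat measure" where
  "Ylaw n = density (count_space UNIV) (\<lambda>m. ennreal (real (hcoef n m) / real (htot n)))"

definition Yscaled_law :: "nat \<Rightarrow> real measure" where
  "Yscaled_law n = distr (Ylaw n) borel (\<lambda>m. real m / (2 * real n))"

definition beta12 :: "real measure" where
  "beta12 = density lborel (\<lambda>y. ennreal (indicator {0..1} y * (2 * (1 - y))))"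

end

theory Submission
  imports Defs "HOL-Real_Asymp.Real_Asymp"
begin


lemma UNIV_bstep: "(UNIV::bstep set) = {U1,U2,D}"
  using bstep.exhaust by auto

lemma finite_len: "finite {P::bstep list. length P = k}"
proof -
  have "{P::bstep list. length P = k} = {P. set P \<subseteq> UNIV \<and> length P = k}" by simp
  also have "finite \<dots>" by (rule finite_lists_length_eq) (simp add: UNIV_bstep)
  finally show ?thesis .
qed

lemma height_Nil[simp]: "height [] = 0" by (simp add: height_def)
lemma height_Cons[simp]: "height (x#xs) = stepval x + height xs" by (simp add: height_def)
lemma height_append[simp]: "height (xs@ys) = height xs + height ys" by (simp add: height_def)

lemma height_parity: "even (height P + int (length P))"
  proof (induction P)
  case (Cons a P) then show ?case by (cases a) auto
qed simp

lemma height_le_length: "height P \<le> int (length P)"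
proof (induction P)
  case (Cons a P) then show ?case by (cases a) auto
qed simp

definition dyckL :: "nat \<Rightarrow> bstep list set" where
  "dyckL k = {P. length P = k \<and> bic_dyck P \<and> U2 \<notin> set P}"

lemma finite_dyckL[simp]: "finite (dyckL k)"
  by (rule finite_subset[OF _ finite_len[of k]]) (auto simp: dyckL_def)

lemma dyckL_odd: "odd k \<Longrightarrow> dyckL k = {}"
  using height_parity by (fastforce simp: dyckL_def bic_dyck_def)

definition nonneg :: "bstep list \<Rightarrow> bool" where
  "nonneg P \<longleftrightarrow> (\<forall>k \<le> length P. height (take k P) \<ge> 0)"

lemma nonneg_snoc: "nonneg (Q@[x]) \<longleftrightarrow> nonneg Q \<and> height Q + stepval x \<ge> 0"
proof -
  have "(\<forall>k \<le> length (Q@[x]). height (take k (Q@[x])) \<ge> 0) \<longleftrightarrow>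
        (\<forall>k \<le> length Q. height (take k Q) \<ge> 0) \<and> height (Q@[x]) \<ge> 0"
  proof
    assume H: "\<forall>k \<le> length (Q@[x]). height (take k (Q@[x])) \<ge> 0"
    have "\<forall>k \<le> length Q. height (take k Q) \<ge> 0"
    proof (intro allI impI)
      fix k assume "k \<le> length Q"
      then show "height (take k Q) \<ge> 0" using H[rule_format, of k] by simp
    qed
    moreover have "height (Q@[x]) \<ge> 0" using H[rule_format, of "length (Q@[x])"] by simp
    ultimately show "(\<forall>k \<le> length Q. height (take k Q) \<ge> 0) \<and> height (Q@[x]) \<ge> 0" by blast
  next
    assume H: "(\<forall>k \<le> length Q. height (take k Q) \<ge> 0) \<and> height (Q@[x]) \<ge> 0"
    show "\<forall>k \<le> length (Q@[x]). height (take k (Q@[x])) \<ge> 0"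
    proof (intro allI impI)
      fix k assume k: "k \<le> length (Q@[x])"
      show "height (take k (Q@[x])) \<ge> 0"
      proof (cases "k \<le> length Q")
        case True then show ?thesis using H by simp
      next
        case False then have "k = length (Q@[x])" using k by simp
        then show ?thesis using H by simp
      qed
    qed
  qed
  then show ?thesis by (simp add: nonneg_def)
qed

lemma nonneg_Nil[simp]: "nonneg []" by (simp add: nonneg_def)

definition W :: "nat \<Rightarrow> nat \<Rightarrow> bstep list set" where
  "W a b = {P. length P = a + b \<and> height P = int a - int b \<and> nonneg P \<and> U2 \<notin> set P}"

lemma finite_W[simp]: "finite (W a b)"
  by (rule finite_subset[OF _ finite_len[of "a+b"]]) (auto simp: W_def)

lemma W_empty: "a < b \<Longrightarrow> W a b = {}"
  by (auto simp: W_def nonneg_def dest!: spec[of _ "a+b"])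

lemma W_00: "W 0 0 = {[]}"
  by (auto simp: W_def)

lemma W_split:
  assumes "a + b > 0"
  shows "W a b = (\<lambda>Q. Q@[U1]) ` (if a > 0 then W (a-1) b else {}) \<union>
                 (\<lambda>Q. Q@[D]) ` (if 0 < b \<and> b \<le> a then W a (b-1) else {})"
proof (intro equalityI subsetI)
  fix P assume P: "P \<in> W a b"
  then have "P \<noteq> []" using assms by (auto simp: W_def)
  then obtain Q x where Px: "P = Q @ [x]" by (metis rev_exhaust)
  have x: "x = U1 \<or> x = D" using P Px by (cases x) (auto simp: W_def)
  show "P \<in> (\<lambda>Q. Q@[U1]) ` (if a > 0 then W (a-1) b else {}) \<union>
                 (\<lambda>Q. Q@[D]) ` (if 0 < b \<and> b \<le> a then W a (b-1) else {})"
  proof (cases "x = U1")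
    case True
    have nQ: "nonneg Q" and hQ: "height Q = int a - int b - 1" using P Px True by (auto simp: W_def nonneg_snoc)
    have "a > 0"
    proof (rule ccontr)
      assume "\<not> a > 0"
      then have "height Q < 0" using hQ by simp
      moreover have "height Q \<ge> 0" using nQ by (auto simp: nonneg_def dest!: spec[of _ "length Q"])
      ultimately show False by simp
    qed
    then have "Q \<in> W (a-1) b" using P Px nQ hQ by (auto simp: W_def)
    then show ?thesis using Px True \<open>a>0\<close> by auto
  next
    case False
    then have xD: "x = D" using x by simp
    have nQ: "nonneg Q" and hQ: "height Q = int a - int b + 1" and hP: "height P \<ge> 0"
      using P Px xD by (auto simp: W_def nonneg_snoc)
    have "b > 0" using P Px xD height_le_length[of Q] hQ by (auto simp: W_def)
    moreover have "b \<le> a" using hP P by (auto simp: W_def)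
    moreover have "Q \<in> W a (b-1)" using P Px nQ hQ \<open>b>0\<close> by (auto simp: W_def)
    ultimately show ?thesis using Px xD by auto
  qed
next
  fix P assume "P \<in> (\<lambda>Q. Q@[U1]) ` (if a > 0 then W (a-1) b else {}) \<union>
                 (\<lambda>Q. Q@[D]) ` (if 0 < b \<and> b \<le> a then W a (b-1) else {})"
  then show "P \<in> W a b"
  proof
    assume "P \<in> (\<lambda>Q. Q@[U1]) ` (if a > 0 then W (a-1) b else {})"
    then obtain Q where "a > 0" "Q \<in> W (a-1) b" "P = Q@[U1]" by (auto split: if_splits)
    moreover have "height Q \<ge> 0" using \<open>Q \<in> W (a-1) b\<close>
      by (auto simp: W_def nonneg_def dest!: spec[of _ "length Q"])
    ultimately show ?thesis by (auto simp: W_def nonneg_snoc)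
  next
    assume "P \<in> (\<lambda>Q. Q@[D]) ` (if 0 < b \<and> b \<le> a then W a (b-1) else {})"
    then obtain Q where "0 < b" "b \<le> a" "Q \<in> W a (b-1)" "P = Q@[D]" by (auto split: if_splits)
    then show ?thesis by (auto simp: W_def nonneg_snoc)
  qed
qed

lemma card_W_rec:
  assumes "a + b > 0"
  shows "card (W a b) = (if a > 0 then card (W (a-1) b) else 0) +
                        (if 0 < b \<and> b \<le> a then card (W a (b-1)) else 0)"
proof -
  have "card (W a b) = card ((\<lambda>Q. Q@[U1]) ` (if a > 0 then W (a-1) b else {})) +
                 card ((\<lambda>Q. Q@[D]) ` (if 0 < b \<and> b \<le> a then W a (b-1) else {}))"
    unfolding W_split[OF assms] by (rule card_Un_disjoint) auto
  also have "\<dots> = (if a > 0 then card (W (a-1) b) else 0) +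
                        (if 0 < b \<and> b \<le> a then card (W a (b-1)) else 0)"
    by (simp add: card_image inj_on_def)
  finally show ?thesis .
qed

lemma alg_aux:
  fixes x y X :: real
  assumes "x > 0" "y \<ge> 0"
  shows "(x - y) / x * (x * X / (x+y)) + (x + 2 - y) / (x + 1) * (y * X / (x+y)) = (x + 1 - y) / (x + 1) * X"
proof -
  have s: "x + y > 0" "x + 1 > 0" using assms by auto
  have "(x - y) / x * (x * X / (x+y)) = (x - y) * X / (x+y)" using assms by simp
  moreover have "(x - y) * X / (x+y) + (x + 2 - y) / (x + 1) * (y * X / (x+y))
     = ((x-y)*(x+1) + (x+2-y)*y) * X / ((x+y)*(x+1))"
  proof -
    have c: "(x+y)*(x+1) \<noteq> 0" using s by simp
    have "(x - y) * X / (x+y) = (x-y)*(x+1)*X / ((x+y)*(x+1))" using s by simp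
    moreover have "(x + 2 - y) / (x + 1) * (y * X / (x+y)) = (x+2-y)*y*X / ((x+y)*(x+1))" using s by (simp add: mult.commute mult.assoc)
    ultimately show ?thesis by (simp add: add_divide_distrib[symmetric] algebra_simps)
  qed
  moreover have "(x-y)*(x+1) + (x+2-y)*y = (x+y)*(x+1-y)" by (simp add: algebra_simps)
  moreover have "(x+y)*(x+1-y) * X / ((x+y)*(x+1)) = (x + 1 - y) / (x + 1) * X" using s by simp
  ultimately show ?thesis using assms by simp
qed

lemma card_W_formula:
  "real (card (W a b)) = (if b \<le> a then (real a + 1 - real b) / (real a + 1) * real ((a+b) choose b) else 0)"
proof (induction "a+b" arbitrary: a b)
  case 0 then show ?case by (simp add: W_00)
next
  case (Suc s)
  show ?case
  proof (cases "b \<le> a")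
    case False then show ?thesis by (simp add: W_empty)
  next
    case True
    then have "a > 0" using Suc.hyps by simp
    have rec: "card (W a b) = card (W (a-1) b) + (if 0 < b then card (W a (b-1)) else 0)"
      using card_W_rec[of a b] \<open>a>0\<close> True Suc.hyps by simp
    have IH1: "real (card (W (a-1) b)) = (real a - real b) / real a * real ((a+b-1) choose b)"
    proof -
      have "real (card (W (a-1) b)) = (if b \<le> a-1 then (real (a-1) + 1 - real b) / (real (a-1) + 1) * real ((a-1+b) choose b) else 0)"
        using Suc.hyps(1)[of "a-1" b] Suc.hyps(2) \<open>a>0\<close> by simp
      then show ?thesis using \<open>a>0\<close> True by (cases "b = a") (auto simp: of_nat_diff)
    qed
    show ?thesis
    proof (cases "b = 0")
      case True
      then show ?thesis using rec IH1 \<open>a>0\<close> by simp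
    next
      case False
      have IH2: "real (card (W a (b-1))) = (real a + 2 - real b) / (real a + 1) * real ((a+b-1) choose (b-1))"
      proof -
        have "real (card (W a (b-1))) = (if b-1 \<le> a then (real a + 1 - real (b-1)) / (real a + 1) * real ((a+(b-1)) choose (b-1)) else 0)"
          using Suc.hyps(1)[of a "b-1"] Suc.hyps(2) False by simp
        then show ?thesis using False True by (simp add: of_nat_diff)
      qed
      define X where "X = real ((a+b) choose b)"
      have e1: "real a * X = real (a+b) * real ((a+b-1) choose b)"
        using binomial_absorb_comp[of "a+b" b] unfolding X_def by (metis add_diff_cancel_right' of_nat_mult)
      have e2: "real b * X = real (a+b) * real ((a+b-1) choose (b-1))"
        using binomial_absorption[of "b-1" "a+b"] False unfolding X_def
        by (metis Suc_pred' not_gr_zero of_nat_mult)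
      have spos: "real (a+b) > 0" using \<open>a>0\<close> by simp
      have b1: "real ((a+b-1) choose b) = real a * X / real (a+b)" using e1 spos by (simp add: field_simps)
      have b2: "real ((a+b-1) choose (b-1)) = real b * X / real (a+b)" using e2 spos by (simp add: field_simps)
      have "real (card (W a b)) = (real a - real b) / real a * (real a * X / real (a+b)) +
               (real a + 2 - real b) / (real a + 1) * (real b * X / real (a+b))"
        using rec IH1 IH2 False b1 b2 by simp
      also have "\<dots> = (real a + 1 - real b) / (real a + 1) * X"
        using alg_aux[of "real a" "real b" X] \<open>a>0\<close> by simp
      finally show ?thesis using True X_def by simp
    qed
  qed
qed

lemma dyckL_even: "dyckL (2*j) = W j j"
  by (auto simp: dyckL_def W_def bic_dyck_def nonneg_def)

lemma card_dyckL_even: "real (card (dyckL (2*j))) = real ((2*j) choose j) / (real j + 1)"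
  unfolding dyckL_even card_W_formula by (simp add: mult_2)

lemma dyckL_iff: "P \<in> dyckL k \<longleftrightarrow> length P = k \<and> height P = 0 \<and> nonneg P \<and> U2 \<notin> set P"
  by (auto simp: dyckL_def bic_dyck_def nonneg_def)

lemma nonneg_height_take: "nonneg P \<Longrightarrow> k \<le> length P \<Longrightarrow> height (take k P) \<ge> 0"
  by (auto simp: nonneg_def)

definition Acnt :: "nat \<Rightarrow> nat \<Rightarrow> nat" where
  "Acnt n i = card {P \<in> dyckL (2*n). P ! i = U1}"

definition Zcnt :: "nat \<Rightarrow> nat \<Rightarrow> nat" where
  "Zcnt n i = card {P \<in> dyckL (2*n). height (take i P) = 0}"

lemma nth_U1_or_D: assumes "P \<in> dyckL k" "i < k" shows "P ! i = U1 \<or> P ! i = D"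
proof -
  have "P ! i \<in> set P" using assms by (auto simp: dyckL_iff)
  moreover have "U2 \<notin> set P" using assms by (simp add: dyckL_iff)
  ultimately have "P ! i \<noteq> U2" by metis
  then show ?thesis by (cases "P ! i") auto
qed

subsection \<open>Reversal symmetry\<close>

definition flip :: "bstep \<Rightarrow> bstep" where
  "flip s = (case s of D \<Rightarrow> U1 | _ \<Rightarrow> D)"

lemma stepval_flip[simp]: "stepval (flip s) = - stepval s"
  by (cases s) (auto simp: flip_def)

lemma height_map_flip[simp]: "height (map flip xs) = - height xs"
  by (induction xs) auto

lemma height_rev[simp]: "height (rev xs) = height xs"
  by (induction xs) auto

definition Rv :: "bstep list \<Rightarrow> bstep list" where
  "Rv P = map flip (rev P)"

lemma Rv_Rv: "U2 \<notin> set P \<Longrightarrow> Rv (Rv P) = P"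
proof -
  assume "U2 \<notin> set P"
  then have "\<forall>s\<in>set P. flip (flip s) = s" by (auto simp: flip_def split: bstep.splits)
  then show ?thesis by (simp add: Rv_def rev_map map_idI)
qed

lemma Rv_dyckL: assumes "P \<in> dyckL k" shows "Rv P \<in> dyckL k"
proof -
  have P: "length P = k" "height P = 0" "nonneg P" "U2 \<notin> set P" using assms by (auto simp: dyckL_iff)
  have "U2 \<notin> set (Rv P)" by (auto simp: Rv_def flip_def split: bstep.splits)
  moreover have "nonneg (Rv P)"
    unfolding nonneg_def
  proof (intro allI impI)
    fix j assume j: "j \<le> length (Rv P)"
    have "take j (Rv P) = map flip (rev (drop (length P - j) P))"
      by (simp add: Rv_def take_map take_rev)
    then have "height (take j (Rv P)) = - height (drop (length P - j) P)" by simp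
    also have "\<dots> = height (take (length P - j) P)"
    proof -
      have "height P = height (take (length P - j) P) + height (drop (length P - j) P)"
        by (metis append_take_drop_id height_append)
      then show ?thesis using P(2) by linarith
    qed
    also have "\<dots> \<ge> 0" using P(3) by (auto simp: nonneg_def)
    finally show "height (take j (Rv P)) \<ge> 0" .
  qed
  ultimately show ?thesis using P by (auto simp: dyckL_iff Rv_def)
qed

lemma Rv_nth: "i < length P \<Longrightarrow> Rv P ! i = flip (P ! (length P - Suc i))"
  by (simp add: Rv_def rev_nth)

lemma Acnt_sym:
  assumes "i < 2*n"
  shows "Acnt n i + Acnt n (2*n - 1 - i) = card (dyckL (2*n))"
proof -
  let ?S = "dyckL (2*n)"
  let ?j = "2*n - 1 - i"
  have j: "?j < 2*n" using assms by simp
  have img: "Rv ` {P \<in> ?S. P ! ?j = D} = {P \<in> ?S. P ! i = U1}"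
  proof (intro equalityI subsetI)
    fix Q assume "Q \<in> Rv ` {P \<in> ?S. P ! ?j = D}"
    then obtain P where P: "P \<in> ?S" "P ! ?j = D" "Q = Rv P" by auto
    have "length P = 2*n" using P by (auto simp: dyckL_iff)
    then have "Q ! i = flip (P ! ?j)" using P assms by (simp add: Rv_nth Suc_diff_Suc)
    then show "Q \<in> {P \<in> ?S. P ! i = U1}" using P Rv_dyckL by (auto simp: flip_def)
  next
    fix Q assume Q: "Q \<in> {P \<in> ?S. P ! i = U1}"
    have "length Q = 2*n" "U2 \<notin> set Q" using Q by (auto simp: dyckL_iff)
    have "Rv Q ! ?j = flip (Q ! i)" using \<open>length Q = 2*n\<close> assms j by (simp add: Rv_nth)
    then have "Rv Q \<in> {P \<in> ?S. P ! ?j = D}" using Q Rv_dyckL by (auto simp: flip_def)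
    moreover have "Q = Rv (Rv Q)" using Rv_Rv \<open>U2 \<notin> set Q\<close> by simp
    ultimately show "Q \<in> Rv ` {P \<in> ?S. P ! ?j = D}" by blast
  qed
  have inj: "inj_on Rv {P \<in> ?S. P ! ?j = D}"
    by (rule inj_on_inverseI[where g = Rv]) (auto simp: dyckL_iff Rv_Rv)
  have "Acnt n i = card {P \<in> ?S. P ! ?j = D}"
    unfolding Acnt_def img[symmetric] by (rule card_image[OF inj])
  also have "{P \<in> ?S. P ! ?j = D} = ?S - {P \<in> ?S. P ! ?j = U1}"
    using nth_U1_or_D[OF _ j] by auto
  also have "card \<dots> = card ?S - Acnt n ?j"
    unfolding Acnt_def by (rule card_Diff_subset) auto
  finally show ?thesis
    using card_mono[of ?S "{P \<in> ?S. P ! ?j = U1}"] unfolding Acnt_def by auto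
qed

subsection \<open>Swapping adjacent steps\<close>

lemma nonneg_swap:
  assumes "nonneg (xs @ [a, b] @ ys)" "height xs + stepval b \<ge> 0"
  shows "nonneg (xs @ [b, a] @ ys)"
  unfolding nonneg_def
proof (intro allI impI)
  fix k assume k: "k \<le> length (xs @ [b, a] @ ys)"
  consider "k \<le> length xs" | "k = Suc (length xs)" | "k \<ge> length xs + 2" by linarith
  then show "height (take k (xs @ [b, a] @ ys)) \<ge> 0"
  proof cases
    case 1
    then have "take k (xs @ [b, a] @ ys) = take k (xs @ [a, b] @ ys)" by simp
    moreover have "height (take k (xs @ [a, b] @ ys)) \<ge> 0" using assms(1) k by (intro nonneg_height_take) auto
    ultimately show ?thesis by simp
  next
    case 2
    then have "take k (xs @ [b, a] @ ys) = xs @ [b]" by simp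
    then show ?thesis using assms(2) by simp
  next
    case 3
    then obtain t where t: "k = length xs + 2 + t" using le_Suc_ex by blast
    then have "take k (xs @ [b, a] @ ys) = xs @ [b, a] @ take t ys" by simp
    moreover have "take k (xs @ [a, b] @ ys) = xs @ [a, b] @ take t ys" using t by simp
    moreover have "height (take k (xs @ [a, b] @ ys)) \<ge> 0" using assms(1) k by (auto simp: nonneg_def)
    ultimately show ?thesis by simp
  qed
qed

definition sw :: "nat \<Rightarrow> bstep list \<Rightarrow> bstep list" where
  "sw i P = take i P @ [P ! Suc i, P ! i] @ drop (Suc (Suc i)) P"

lemma decomp2: "Suc i < length P \<Longrightarrow> P = take i P @ [P ! i, P ! Suc i] @ drop (Suc (Suc i)) P"
  by (metis Cons_nth_drop_Suc Suc_lessD append_Cons append_Nil append_take_drop_id)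

lemma sw_props:
  assumes "Suc i < length P"
  shows "length (sw i P) = length P" "sw i P ! i = P ! Suc i" "sw i P ! Suc i = P ! i"
    "sw i (sw i P) = P" "take i (sw i P) = take i P" "set (sw i P) = set P" "height (sw i P) = height P"
proof -
  show l: "length (sw i P) = length P" using assms by (simp add: sw_def)
  show "sw i P ! i = P ! Suc i" using assms by (simp add: sw_def nth_append)
  show "sw i P ! Suc i = P ! i" using assms by (simp add: sw_def nth_append)
  show "take i (sw i P) = take i P" using assms by (simp add: sw_def)
  have "set (sw i P) = set (take i P @ [P ! i, P ! Suc i] @ drop (Suc (Suc i)) P)" by (auto simp: sw_def)
  also have "\<dots> = set P" by (simp only: decomp2[OF assms, symmetric])
  finally show "set (sw i P) = set P" .
  have "height (sw i P) = height (take i P @ [P ! i, P ! Suc i] @ drop (Suc (Suc i)) P)" by (simp add: sw_def)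
  also have "\<dots> = height P" by (simp only: decomp2[OF assms, symmetric])
  finally show "height (sw i P) = height P" .
  show "sw i (sw i P) = P"
    using assms decomp2[OF assms] by (simp add: sw_def nth_append min_def)
qed

lemma sw_dyckL:
  assumes P: "P \<in> dyckL k" and i: "Suc i < k" and h: "height (take i P) + stepval (P ! Suc i) \<ge> 0"
  shows "sw i P \<in> dyckL k"
proof -
  have l: "Suc i < length P" using P i by (simp add: dyckL_iff)
  have "nonneg (take i P @ [P ! i, P ! Suc i] @ drop (Suc (Suc i)) P)"
    using decomp2[OF l] P by (simp add: dyckL_iff)
  then have "nonneg (sw i P)" unfolding sw_def using h by (rule nonneg_swap)
  then show ?thesis using P sw_props[OF l] by (auto simp: dyckL_iff)
qed

lemma height_take_Suc: "i < length P \<Longrightarrow> height (take (Suc i) P) = height (take i P) + stepval (P ! i)"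
  by (simp add: take_Suc_conv_app_nth)

lemma Acnt_step:
  assumes "Suc i < 2*n"
  shows "Acnt n (Suc i) \<le> Acnt n i" "Acnt n i \<le> Acnt n (Suc i) + Zcnt n i"
proof -
  let ?S = "dyckL (2*n)"
  define UU where "UU = {P \<in> ?S. P ! i = U1 \<and> P ! Suc i = U1}"
  define UD where "UD = {P \<in> ?S. P ! i = U1 \<and> P ! Suc i = D}"
  define DU where "DU = {P \<in> ?S. P ! i = D \<and> P ! Suc i = U1}"
  define Z where "Z = {P \<in> ?S. height (take i P) = 0}"
  have fin: "finite UU" "finite UD" "finite DU" "finite Z" by (auto simp: UU_def UD_def DU_def Z_def)
  have i1: "i < 2*n" using assms by simp
  have A1: "Acnt n i = card UU + card UD"
  proof -
    have "{P \<in> ?S. P ! i = U1} = UU \<union> UD" using nth_U1_or_D[OF _ assms] by (auto simp: UU_def UD_def)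
    then show ?thesis unfolding Acnt_def using fin by (simp add: card_Un_disjoint UU_def UD_def disjoint_iff)
  qed
  have A2: "Acnt n (Suc i) = card UU + card DU"
  proof -
    have "{P \<in> ?S. P ! Suc i = U1} = UU \<union> DU" using nth_U1_or_D[OF _ i1] by (auto simp: UU_def DU_def)
    then show ?thesis unfolding Acnt_def using fin by (simp add: card_Un_disjoint UU_def DU_def disjoint_iff)
  qed
  have lenS: "\<And>P. P \<in> ?S \<Longrightarrow> Suc i < length P" using assms by (simp add: dyckL_iff)
  have "card DU \<le> card UD"
  proof (rule card_inj_on_le[where f = "sw i"])
    show "inj_on (sw i) DU" by (rule inj_on_inverseI[where g = "sw i"]) (auto simp: DU_def sw_props(4)[OF lenS])
    show "sw i ` DU \<subseteq> UD"
    proof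
      fix Q assume "Q \<in> sw i ` DU"
      then obtain P where P: "P \<in> DU" "Q = sw i P" by auto
      have l: "Suc i < length P" using P lenS by (auto simp: DU_def)
      have "height (take i P) \<ge> 0" using P l by (auto simp: DU_def dyckL_iff nonneg_def)
      then have "sw i P \<in> ?S" using P by (intro sw_dyckL) (auto simp: DU_def assms)
      then show "Q \<in> UD" using P sw_props[OF l] by (auto simp: UD_def DU_def)
    qed
    show "finite UD" by fact
  qed
  then show "Acnt n (Suc i) \<le> Acnt n i" using A1 A2 by simp
  have "card (UD - Z) \<le> card DU"
  proof (rule card_inj_on_le[where f = "sw i"])
    show "inj_on (sw i) (UD - Z)" by (rule inj_on_inverseI[where g = "sw i"]) (auto simp: UD_def sw_props(4)[OF lenS])
    show "sw i ` (UD - Z) \<subseteq> DU"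
    proof
      fix Q assume "Q \<in> sw i ` (UD - Z)"
      then obtain P where P: "P \<in> UD" "P \<notin> Z" "Q = sw i P" by auto
      have l: "Suc i < length P" using P lenS by (auto simp: UD_def)
      have "height (take i P) \<ge> 0" using P l by (auto simp: UD_def dyckL_iff nonneg_def)
      moreover have "height (take i P) \<noteq> 0" using P by (auto simp: UD_def Z_def)
      ultimately have "sw i P \<in> ?S" using P by (intro sw_dyckL) (auto simp: UD_def assms)
      then show "Q \<in> DU" using P sw_props[OF l] by (auto simp: UD_def DU_def)
    qed
    show "finite DU" by fact
  qed
  moreover have "card UD \<le> card (UD - Z) + card Z"
  proof -
    have "UD \<subseteq> (UD - Z) \<union> Z" by auto
    then have "card UD \<le> card ((UD - Z) \<union> Z)" using fin by (intro card_mono) auto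
    also have "\<dots> \<le> card (UD - Z) + card Z" by (rule card_Un_le)
    finally show ?thesis .
  qed
  moreover have "Zcnt n i = card Z" by (simp add: Zcnt_def Z_def)
  ultimately show "Acnt n i \<le> Acnt n (Suc i) + Zcnt n i" using A1 A2 by simp
qed

subsection \<open>Returns to zero\<close>

lemma Zcnt_le:
  assumes "i \<le> 2*n"
  shows "Zcnt n i \<le> card (dyckL i) * card (dyckL (2*n - i))"
proof -
  let ?Z = "{P \<in> dyckL (2*n). height (take i P) = 0}"
  have "card ?Z \<le> card (dyckL i \<times> dyckL (2*n - i))"
  proof (rule card_inj_on_le[where f = "\<lambda>P. (take i P, drop i P)"])
    show "inj_on (\<lambda>P. (take i P, drop i P)) ?Z"
      by (rule inj_onI) (metis append_take_drop_id prod.inject)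
    show "(\<lambda>P. (take i P, drop i P)) ` ?Z \<subseteq> dyckL i \<times> dyckL (2*n - i)"
    proof
      fix X assume "X \<in> (\<lambda>P. (take i P, drop i P)) ` ?Z"
      then obtain P where P: "P \<in> dyckL (2*n)" "height (take i P) = 0" "X = (take i P, drop i P)" by auto
      have Pp: "length P = 2*n" "height P = 0" "nonneg P" "U2 \<notin> set P" using P by (auto simp: dyckL_iff)
      have "take i P \<in> dyckL i"
      proof -
        have "nonneg (take i P)" unfolding nonneg_def
        proof (intro allI impI)
          fix k assume "k \<le> length (take i P)"
          then have "k \<le> i" "k \<le> length P" by auto
          then have "take k (take i P) = take k P" by (simp add: min_def)
          then show "height (take k (take i P)) \<ge> 0" using Pp \<open>k \<le> length P\<close> nonneg_height_take by simp
        qed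
        moreover have "U2 \<notin> set (take i P)" using Pp(4) in_set_takeD by fastforce
        ultimately show ?thesis using P Pp assms by (auto simp: dyckL_iff)
      qed
      moreover have "drop i P \<in> dyckL (2*n - i)"
      proof -
        have hs: "height (take (i + k) P) = height (take i P) + height (take k (drop i P))" for k
          by (simp add: take_add)
        have "nonneg (drop i P)" unfolding nonneg_def
        proof (intro allI impI)
          fix k assume "k \<le> length (drop i P)"
          then have "height (take (i + k) P) \<ge> 0" using Pp assms by (intro nonneg_height_take) auto
          then show "height (take k (drop i P)) \<ge> 0" using hs[of k] P(2) by simp
        qed
        moreover have "U2 \<notin> set (drop i P)" using Pp(4) in_set_dropD by fastforce
        moreover have "height (drop i P) = 0"
          using hs[of "length P"] Pp P(2) by simp
        ultimately show ?thesis using Pp by (auto simp: dyckL_iff)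
      qed
      ultimately show "X \<in> dyckL i \<times> dyckL (2*n - i)" using P by simp
    qed
    show "finite (dyckL i \<times> dyckL (2*n - i))" by simp
  qed
  then show ?thesis by (simp add: Zcnt_def card_cartesian_product)
qed

subsection \<open>Decomposition of hcoef\<close>

lemma stepval_map_take:
  assumes "map stepval xs = map stepval ys"
  shows "height (take k xs) = height (take k ys)"
proof -
  have "height (take k xs) = sum_list (map stepval (take k xs))" by (simp add: height_def)
  also have "\<dots> = sum_list (take k (map stepval xs))" by (simp add: take_map)
  also have "\<dots> = sum_list (take k (map stepval ys))" using assms by simp
  also have "\<dots> = height (take k ys)" by (simp add: height_def take_map)
  finally show ?thesis .
qed

lemma bic_dyck_map_eq:
  assumes "map stepval xs = map stepval ys"
  shows "bic_dyck xs \<longleftrightarrow> bic_dyck ys"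
proof -
  have l: "length xs = length ys" using assms map_eq_imp_length_eq by blast
  have "height xs = height ys" using stepval_map_take[OF assms, of "length xs"] l by simp
  then show ?thesis using stepval_map_take[OF assms] l by (simp add: bic_dyck_def)
qed

lemma map_stepval_update:
  assumes "i < length Q" "stepval x = stepval (Q ! i)"
  shows "map stepval (Q[i := x]) = map stepval Q"
proof -
  have "map stepval (Q[i := x]) = (map stepval Q)[i := stepval x]" by (rule map_update)
  also have "\<dots> = (map stepval Q)[i := (map stepval Q) ! i]" using assms by simp
  also have "\<dots> = map stepval Q" by (rule list_update_id)
  finally show ?thesis .
qed

lemma card_U2_single:
  assumes "length (filter (\<lambda>s. s = U2) P) = 1" "i < length P" "P ! i = U2" "j < length P" "P ! j = U2"
  shows "i = j"
proof -
  have "card {k. k < length P \<and> P ! k = U2} = 1" using assms(1) by (simp add: length_filter_conv_card)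
  then obtain a where "{k. k < length P \<and> P ! k = U2} = {a}" using card_1_singletonE by blast
  then have "i \<in> {a}" "j \<in> {a}" using assms by (metis (mono_tags, lifting) mem_Collect_eq)+
  then show ?thesis by simp
qed

definition Hi :: "nat \<Rightarrow> nat \<Rightarrow> bstep list set" where
  "Hi n i = {P. length P = 2*n \<and> bic_dyck P \<and> length (filter (\<lambda>s. s = U2) P) = 1 \<and> P ! i = U2}"

lemma card_Hi:
  assumes "i < 2*n"
  shows "card (Hi n i) = Acnt n i"
proof -
  let ?A = "{P \<in> dyckL (2*n). P ! i = U1}"
  have img: "(\<lambda>Q. Q[i := U2]) ` ?A = Hi n i"
  proof (intro equalityI subsetI)
    fix X assume "X \<in> (\<lambda>Q. Q[i := U2]) ` ?A"
    then obtain Q where Q: "Q \<in> dyckL (2*n)" "Q ! i = U1" "X = Q[i := U2]" by auto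
    have Qp: "length Q = 2*n" "bic_dyck Q" "U2 \<notin> set Q" using Q by (auto simp: dyckL_def)
    have me: "map stepval X = map stepval Q" unfolding Q(3) using Q Qp assms by (intro map_stepval_update) auto
    have "{k. k < length X \<and> X ! k = U2} = {i}"
    proof -
      have "k < length Q \<Longrightarrow> Q ! k \<noteq> U2" for k using Qp(3) nth_mem by metis
      then show ?thesis using Q Qp assms by (auto simp: nth_list_update)
    qed
    then have "length (filter (\<lambda>s. s = U2) X) = 1" by (simp add: length_filter_conv_card)
    then show "X \<in> Hi n i" using Q Qp assms me bic_dyck_map_eq[OF me] by (auto simp: Hi_def)
  next
    fix X assume X: "X \<in> Hi n i"
    have Xp: "length X = 2*n" "bic_dyck X" "length (filter (\<lambda>s. s = U2) X) = 1" "X ! i = U2"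
      using X by (auto simp: Hi_def)
    let ?Q = "X[i := U1]"
    have me: "map stepval ?Q = map stepval X" using Xp assms by (intro map_stepval_update) auto
    have "U2 \<notin> set ?Q"
    proof
      assume "U2 \<in> set ?Q"
      then obtain k where k: "k < length ?Q" "?Q ! k = U2" by (metis in_set_conv_nth)
      then have "k \<noteq> i" using assms Xp by auto
      then have "X ! k = U2" using k by simp
      then show False using card_U2_single[OF Xp(3), of i k] k \<open>k \<noteq> i\<close> Xp assms by simp
    qed
    then have "?Q \<in> ?A" using Xp assms bic_dyck_map_eq[OF me] by (auto simp: dyckL_def)
    moreover have "X = ?Q[i := U2]" by (metis Xp(4) list_update_id list_update_overwrite)
    ultimately show "X \<in> (\<lambda>Q. Q[i := U2]) ` ?A" by blast
  qed
  have inj: "inj_on (\<lambda>Q. Q[i := U2]) ?A"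
  proof (rule inj_on_inverseI[where g = "\<lambda>X. X[i := U1]"])
    fix Q assume "Q \<in> ?A"
    then show "(Q[i := U2])[i := U1] = Q" by (metis (mono_tags, lifting) list_update_id list_update_overwrite mem_Collect_eq)
  qed
  show ?thesis unfolding Acnt_def img[symmetric] by (rule card_image[OF inj])
qed

lemma hcoef_sum:
  assumes "m \<ge> 1"
  shows "hcoef n m = (\<Sum>i\<in>{m-1..<2*n}. Acnt n i)"
proof -
  let ?H = "{P. length P = 2 * n \<and> bic_dyck P \<and> length (filter (\<lambda>s. s = U2) P) = 1 \<and>
      (\<exists>p. 1 \<le> p \<and> p \<le> length P \<and> P ! (p - 1) = U2 \<and> 1 \<le> m \<and> m \<le> p)}"
  have H: "?H = (\<Union>i\<in>{m-1..<2*n}. Hi n i)"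
  proof (intro equalityI subsetI)
    fix P assume "P \<in> ?H"
    then obtain p where "length P = 2 * n" "bic_dyck P" "length (filter (\<lambda>s. s = U2) P) = 1"
      "1 \<le> p" "p \<le> length P" "P ! (p - 1) = U2" "m \<le> p" by blast
    then have "P \<in> Hi n (p-1)" "p - 1 \<in> {m-1..<2*n}" by (auto simp: Hi_def)
    then show "P \<in> (\<Union>i\<in>{m-1..<2*n}. Hi n i)" by blast
  next
    fix P assume "P \<in> (\<Union>i\<in>{m-1..<2*n}. Hi n i)"
    then obtain i where i: "i \<in> {m-1..<2*n}" "P \<in> Hi n i" by blast
    then show "P \<in> ?H" using assms
      by (auto simp: Hi_def intro!: exI[of _ "Suc i"])
  qed
  have "hcoef n m = card (\<Union>i\<in>{m-1..<2*n}. Hi n i)" unfolding hcoef_def H ..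
  also have "\<dots> = (\<Sum>i\<in>{m-1..<2*n}. card (Hi n i))"
  proof (rule card_UN_disjoint)
    show "finite {m-1..<2*n}" by simp
    show "\<forall>i\<in>{m-1..<2*n}. finite (Hi n i)"
      by (auto intro: finite_subset[OF _ finite_len[of "2*n"]] simp: Hi_def)
    show "\<forall>i\<in>{m-1..<2*n}. \<forall>j\<in>{m-1..<2*n}. i \<noteq> j \<longrightarrow> Hi n i \<inter> Hi n j = {}"
      using card_U2_single by (fastforce simp: Hi_def)
  qed
  also have "\<dots> = (\<Sum>i\<in>{m-1..<2*n}. Acnt n i)" by (rule sum.cong) (auto simp: card_Hi)
  finally show ?thesis .
qed

lemma hcoef_0: "hcoef n 0 = 0"
  by (simp add: hcoef_def)




lemma central_binom_rec_nat: "((2*Suc j) choose Suc j) * (j + 1) = 2 * (2 * j + 1) * ((2*j) choose j)"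
proof -
  have e1: "Suc (Suc (2*j)) * (Suc (2*j) choose j) = (Suc (Suc (2*j)) choose Suc j) * Suc j"
    by (rule Suc_times_binomial_eq)
  have e2: "Suc (2*j) * ((2*j) choose j) = (Suc (2*j) choose Suc j) * Suc j"
    by (rule Suc_times_binomial_eq)
  have e3: "(Suc (2*j) choose Suc j) = (Suc (2*j) choose j)"
    using binomial_symmetric[of j "Suc (2*j)"] by simp
  have e4: "2 * Suc j = Suc (Suc (2*j))" by simp
  have "((2*Suc j) choose Suc j) * (j + 1) * (j + 1) = Suc (Suc (2*j)) * ((Suc (2*j) choose j) * Suc j)"
    unfolding e4 using e1 by (simp del: binomial_Suc_Suc add: ac_simps)
  also have "\<dots> = Suc (Suc (2*j)) * (Suc (2*j) * ((2*j) choose j))"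
    using e2 e3 by (simp del: binomial_Suc_Suc add: ac_simps)
  also have "\<dots> = 2 * (2 * j + 1) * ((2*j) choose j) * (j + 1)" by (simp del: binomial_Suc_Suc add: algebra_simps)
  finally have h: "((2*Suc j) choose Suc j) * (j + 1) * (j + 1) = 2 * (2 * j + 1) * ((2*j) choose j) * (j + 1)" .
  show ?thesis by (rule mult_right_cancel[THEN iffD1, OF _ h]) simp
qed

lemma central_binom_rec: "real ((2*Suc j) choose Suc j) * (real j + 1) = 2 * (2 * real j + 1) * real ((2*j) choose j)"
proof -
  have "real (((2*Suc j) choose Suc j) * (j + 1)) = real (2 * (2 * j + 1) * ((2*j) choose j))"
    using central_binom_rec_nat by presburger
  then show ?thesis by (simp del: binomial_Suc_Suc add: algebra_simps)
qed

definition Bc :: "nat \<Rightarrow> real" where "Bc j = real ((2*j) choose j)"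

lemma Bc_pos: "Bc j > 0" by (simp add: Bc_def)

lemma Bc_Suc: "Bc (Suc j) = Bc j * (2 * (2 * real j + 1)) / (real j + 1)"
  using central_binom_rec[of j] unfolding Bc_def by (simp add: field_simps)

lemma gen1: "(x::real) > 0 \<Longrightarrow> (b * c / x) ^ 2 * d = b^2 * (c^2 * d / x^2)"
  by (simp add: power2_eq_square field_simps)
lemma gen2: "(x::real) > 0 \<Longrightarrow> (b / x) ^ 2 * x ^ 3 = b^2 * x"
  by (simp add: power2_eq_square power3_eq_cube field_simps)
lemma gen3: "(x::real) > 0 \<Longrightarrow> (b / x) ^ 2 * (x ^ 2 * y) = b^2 * y"
  by (simp add: power2_eq_square field_simps)

lemma Bc_upper: "Bc j ^ 2 * (real j + 1) \<le> 16 ^ j"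
proof (induction j)
  case 0 then show ?case by (simp add: Bc_def)
next
  case (Suc j)
  have "Bc (Suc j) ^ 2 * (real (Suc j) + 1) = Bc j ^ 2 * ((2 * (2 * real j + 1))^2 * (real j + 2) / (real j + 1)^2)"
    unfolding Bc_Suc using gen1[of "real j + 1" "Bc j" "2 * (2 * real j + 1)" "real j + 2"] by (simp add: ac_simps)
  also have "\<dots> = Bc j ^ 2 * (4 * (2 * real j + 1)^2 * (real j + 2) / (real j + 1)^2)"
  proof -
    have sq: "(2 * (2 * real j + 1))^2 = 4 * (2 * real j + 1)^2" by (simp add: power2_eq_square algebra_simps)
    show ?thesis by (simp only: sq)
  qed
  also have "\<dots> \<le> 16 ^ j / (real j + 1) * (4 * (2 * real j + 1)^2 * (real j + 2) / (real j + 1)^2)"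
  proof (rule mult_right_mono)
    show "Bc j ^ 2 \<le> 16 ^ j / (real j + 1)" using Suc.IH by (simp add: field_simps)
  qed simp
  also have "\<dots> \<le> 16 ^ Suc j"
  proof -
    have "(2 * real j + 1)^2 * (real j + 2) \<le> 4 * (real j + 1)^3"
      by (simp add: power2_eq_square power3_eq_cube algebra_simps)
    then have q: "4 * (2 * real j + 1)^2 * (real j + 2) / (real j + 1)^3 \<le> 16"
      by (simp add: divide_le_eq mult.commute)
    have "16 ^ j / (real j + 1) * (4 * (2 * real j + 1)^2 * (real j + 2) / (real j + 1)^2)
        = 16 ^ j * (4 * (2 * real j + 1)^2 * (real j + 2) / (real j + 1)^3)"
      by (simp add: power2_eq_square power3_eq_cube)
    also have "\<dots> \<le> 16 ^ j * 16" by (rule mult_left_mono[OF q]) simp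
    finally show ?thesis by simp
  qed
  finally show ?case .
qed

lemma Bc_lower: "n \<ge> 1 \<Longrightarrow> Bc n ^ 2 * (4 * real n) \<ge> 16 ^ n"
proof (induction n rule: dec_induct)
  case base then show ?case by (simp add: Bc_def)
next
  case (step n)
  have "Bc (Suc n) ^ 2 * (4 * real (Suc n)) = Bc n ^ 2 * ((2 * (2 * real n + 1))^2 * (4 * (real n + 1)) / (real n + 1)^2)"
    unfolding Bc_Suc using gen1[of "real n + 1" "Bc n" "2 * (2 * real n + 1)" "4 * (real n + 1)"] by (simp add: ac_simps)
  also have "\<dots> = Bc n ^ 2 * (16 * (2 * real n + 1)^2 / (real n + 1))"
  proof -
    have g: "(x::real) > 0 \<Longrightarrow> (4 * y) * (4 * x) / x^2 = 16 * y / x" for x y by (simp add: power2_eq_square field_simps)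
    have pos: "real n + 1 > 0" by simp
    have sq: "(2 * (2 * real n + 1))^2 = 4 * (2 * real n + 1)^2" by (simp add: power2_eq_square algebra_simps)
    show ?thesis by (simp only: sq g[OF pos])
  qed
  also have "\<dots> \<ge> 16 ^ n / (4 * real n) * (16 * (2 * real n + 1)^2 / (real n + 1))"
  proof (rule mult_right_mono)
    show "16 ^ n / (4 * real n) \<le> Bc n ^ 2" using step by (simp add: field_simps)
  qed simp
  moreover have "16 ^ n / (4 * real n) * (16 * (2 * real n + 1)^2 / (real n + 1)) \<ge> 16 ^ Suc n"
  proof -
    have "4 * real n * (real n + 1) \<le> (2 * real n + 1)^2"
      by (simp add: power2_eq_square algebra_simps)
    moreover have np: "real n * (real n + 1) > 0" using step(1) by simp
    ultimately have q: "16 \<le> 4 * (2 * real n + 1)^2 / (real n * (real n + 1))"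
      by (simp add: le_divide_eq)
    have "16 ^ n / (4 * real n) * (16 * (2 * real n + 1)^2 / (real n + 1))
        = 16 ^ n * (4 * (2 * real n + 1)^2 / (real n * (real n + 1)))"
      by (simp add: field_simps)
    moreover have "16 ^ n * 16 \<le> 16 ^ n * (4 * (2 * real n + 1)^2 / (real n * (real n + 1)))"
      by (rule mult_left_mono[OF q]) simp
    ultimately show ?thesis by (simp add: ac_simps)
  qed
  ultimately show ?case by linarith
qed

definition cat :: "nat \<Rightarrow> real" where "cat j = Bc j / (real j + 1)"

lemma cat_card: "real (card (dyckL (2*j))) = cat j"
  by (simp add: card_dyckL_even cat_def Bc_def)

lemma cat_pos: "cat j > 0" by (simp add: cat_def Bc_pos)

lemma cat_upper: "cat j ^ 2 * (real j + 1) ^ 3 \<le> 16 ^ j"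
  using Bc_upper[of j] gen2[of "real j + 1" "Bc j"] by (simp add: cat_def)

lemma cat_lower: "n \<ge> 1 \<Longrightarrow> cat n ^ 2 * ((real n + 1) ^ 2 * (4 * real n)) \<ge> 16 ^ n"
proof -
  assume n: "n \<ge> 1"
  have eq: "cat n ^ 2 * ((real n + 1)^2 * (4 * real n)) = Bc n ^2 * (4 * real n)"
    unfolding cat_def by (rule gen3) simp
  show ?thesis unfolding eq using Bc_lower[OF n] .
qed


lemma key_ineq:
  fixes a b c M p q N E1 E2 :: real
  assumes "a \<ge> 0" "b \<ge> 0" "M \<ge> 0" "p > 0" "q > 0" "N > 0"
    and "a * p^3 \<le> E1" "b * q^3 \<le> E2" "E1 * E2 \<le> c * 4 * N"
    and "M^3 * N \<le> 64 * p^3 * q^3"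
  shows "4 * M^3 * a * b \<le> 1024 * c"
proof -
  have P: "p^3 * q^3 * N > 0" using assms by simp
  have "a * p^3 \<ge> 0" using assms by simp
  then have E1: "E1 \<ge> 0" using assms(7) by linarith
  have "(a * p^3) * (b * q^3) \<le> E1 * E2"
    using assms E1 by (intro mult_mono) auto
  then have ab: "(a * p^3) * (b * q^3) \<le> c * 4 * N" using assms(9) by linarith
  have "4 * M^3 * a * b * (p^3 * q^3 * N) = 4 * (M^3 * N) * ((a * p^3) * (b * q^3))"
    by (simp add: algebra_simps)
  also have "\<dots> \<le> 4 * (M^3 * N) * (c * 4 * N)"
    using ab assms by (intro mult_left_mono) auto
  also have "\<dots> \<le> 4 * (64 * p^3 * q^3) * (c * 4 * N)"
  proof (rule mult_right_mono)
    show "4 * (M ^ 3 * N) \<le> 4 * (64 * p ^ 3 * q ^ 3)" using assms(10) by linarith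
    show "0 \<le> c * 4 * N" using ab assms by (meson mult_nonneg_nonneg order_trans zero_le_power less_imp_le)
  qed
  also have "\<dots> = 1024 * c * (p^3 * q^3 * N)" by (simp add: algebra_simps)
  finally have h: "4 * M^3 * a * b * (p^3 * q^3 * N) \<le> 1024 * c * (p^3 * q^3 * N)" .
  show ?thesis by (rule mult_right_le_imp_le[OF h P])
qed

lemma T_bound:
  assumes n: "n \<ge> 1" and j: "j < n"
  defines "M \<equiv> real (min (2*j+1) (2*n-2*j))"
  shows "cat j * cat (n-j) * (2 * M) \<le> 32 * cat n / sqrt M"
proof -
  define p where "p = real j + 1"
  define q where "q = real (n-j) + 1"
  define N where "N = real n * (real n + 1)^2"
  have Mpos: "M > 0" using j by (simp add: M_def)
  have pq: "p > 0" "q > 0" "N > 0" using n by (auto simp: p_def q_def N_def)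
  have a: "cat j ^ 2 * p^3 \<le> 16 ^ j" using cat_upper[of j] by (simp add: p_def)
  have b: "cat (n-j) ^ 2 * q^3 \<le> 16 ^ (n-j)" using cat_upper[of "n-j"] by (simp add: q_def)
  have c: "16 ^ j * 16 ^ (n-j) \<le> cat n ^ 2 * 4 * N"
  proof -
    have "(16::real) ^ j * 16 ^ (n-j) = 16 ^ n" using j by (simp add: power_add[symmetric])
    then show ?thesis using cat_lower[OF n] by (simp add: N_def algebra_simps)
  qed
  have d: "M^3 * N \<le> 64 * p^3 * q^3"
  proof -
    have spq: "p + q = real n + 2" using j by (simp add: p_def q_def of_nat_diff)
    have M1: "M \<le> 2 * p" "M \<le> 2 * q" using j by (auto simp: M_def p_def q_def of_nat_diff)
    have N1: "N \<le> (real n + 2)^3" unfolding N_def by (simp add: power2_eq_square power3_eq_cube algebra_simps)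
    show ?thesis
    proof (cases "p \<le> q")
      case True
      have "M^3 \<le> (2*p)^3" using M1 Mpos by (intro power_mono) auto
      moreover have "N \<le> (2*q)^3"
      proof -
        have "(real n + 2)^3 \<le> (2*q)^3" using spq True by (intro power_mono) auto
        then show ?thesis using N1 by linarith
      qed
      ultimately have "M^3 * N \<le> (2*p)^3 * (2*q)^3" using Mpos pq by (intro mult_mono) auto
      then show ?thesis by (simp add: power_mult_distrib)
    next
      case False
      have "M^3 \<le> (2*q)^3" using M1 Mpos by (intro power_mono) auto
      moreover have "N \<le> (2*p)^3"
      proof -
        have "(real n + 2)^3 \<le> (2*p)^3" using spq False by (intro power_mono) auto
        then show ?thesis using N1 by linarith
      qed
      ultimately have "M^3 * N \<le> (2*q)^3 * (2*p)^3" using Mpos pq by (intro mult_mono) auto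
      then show ?thesis by (simp add: power_mult_distrib ac_simps)
    qed
  qed
  have K: "4 * M^3 * cat j ^ 2 * cat (n-j) ^ 2 \<le> 1024 * cat n ^ 2"
    by (rule key_ineq[OF _ _ _ pq a b c d]) (use Mpos in auto)
  define X where "X = cat j * cat (n-j) * (2 * M)"
  have X0: "X \<ge> 0" using cat_pos[of j] cat_pos[of "n-j"] Mpos by (simp add: X_def)
  have "X^2 * M = 4 * M^3 * cat j ^ 2 * cat (n-j) ^ 2"
    by (simp add: X_def power2_eq_square power3_eq_cube algebra_simps)
  then have "X^2 \<le> 1024 * cat n ^ 2 / M" using K Mpos by (simp add: le_divide_eq)
  also have "\<dots> = (32 * cat n / sqrt M) ^ 2" using Mpos by (simp add: power_divide power_mult_distrib)
  finally have "X \<le> 32 * cat n / sqrt M"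
    by (rule power2_le_imp_le) (use cat_pos[of n] Mpos in simp)
  then show ?thesis by (simp add: X_def)
qed




lemma A_tele:
  assumes "p \<le> q" "q < 2*n"
  shows "Acnt n q \<le> Acnt n p \<and> Acnt n p \<le> Acnt n q + (\<Sum>r\<in>{p..<q}. Zcnt n r)"
  using assms
proof (induction q rule: dec_induct)
  case base then show ?case by simp
next
  case (step q)
  have s: "Acnt n (Suc q) \<le> Acnt n q" "Acnt n q \<le> Acnt n (Suc q) + Zcnt n q"
    using Acnt_step[of q n] step by auto
  have IH: "Acnt n q \<le> Acnt n p \<and> Acnt n p \<le> Acnt n q + (\<Sum>r\<in>{p..<q}. Zcnt n r)"
    using step by simp
  have "(\<Sum>r\<in>{p..<Suc q}. Zcnt n r) = (\<Sum>r\<in>{p..<q}. Zcnt n r) + Zcnt n q"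
    using step(1) by simp
  then show ?case using s IH by linarith
qed

definition CC :: "nat \<Rightarrow> real" where "CC n = real (card (dyckL (2*n)))"

lemma real_tele:
  assumes "y \<le> x \<and> x \<le> y + (\<Sum>r\<in>R. Zcnt n r)"
  shows "real y \<le> real x \<and> real x \<le> real y + (\<Sum>r\<in>R. real (Zcnt n r))"
proof -
  have "real x \<le> real (y + (\<Sum>r\<in>R. Zcnt n r))" using assms by (simp only: of_nat_le_iff)
  also have "\<dots> = real y + (\<Sum>r\<in>R. real (Zcnt n r))" by simp
  finally show ?thesis using assms by simp
qed

lemma b_bound:
  assumes "i < 2*n"
  shows "\<bar>2 * real (Acnt n i) - CC n\<bar> \<le> (\<Sum>r\<in>{min i (2*n-1-i)..<max i (2*n-1-i)}. real (Zcnt n r))"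
proof -
  have sym: "real (Acnt n i) + real (Acnt n (2*n-1-i)) = CC n"
    using Acnt_sym[OF assms] unfolding CC_def by (metis of_nat_add)
  show ?thesis
  proof (cases "i \<le> 2*n-1-i")
    case True
    have "real (Acnt n (2*n-1-i)) \<le> real (Acnt n i) \<and> real (Acnt n i) \<le> real (Acnt n (2*n-1-i)) + (\<Sum>r\<in>{i..<2*n-1-i}. real (Zcnt n r))"
      using A_tele[OF True] assms by (intro real_tele) simp
    moreover have "min i (2*n-1-i) = i" "max i (2*n-1-i) = 2*n-1-i" using True by auto
    ultimately show ?thesis using sym by simp
  next
    case False
    then have F: "2*n-1-i \<le> i" by simp
    have "real (Acnt n i) \<le> real (Acnt n (2*n-1-i)) \<and> real (Acnt n (2*n-1-i)) \<le> real (Acnt n i) + (\<Sum>r\<in>{2*n-1-i..<i}. real (Zcnt n r))"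
      using A_tele[OF F] assms by (intro real_tele) simp
    moreover have "min i (2*n-1-i) = 2*n-1-i" "max i (2*n-1-i) = i" using F by auto
    ultimately show ?thesis using sym by simp
  qed
qed

lemma hcoef_dev:
  assumes "1 \<le> m" "m \<le> 2*n+1"
  shows "\<bar>2 * real (hcoef n m) - CC n * (real (2*n+1) - real m)\<bar> \<le> (\<Sum>i<2*n. \<bar>2 * real (Acnt n i) - CC n\<bar>)"
proof -
  have "2 * real (hcoef n m) - CC n * (real (2*n+1) - real m) = (\<Sum>i\<in>{m-1..<2*n}. (2 * real (Acnt n i) - CC n))"
  proof -
    have "real (hcoef n m) = (\<Sum>i\<in>{m-1..<2*n}. real (Acnt n i))" using hcoef_sum[OF assms(1)] by simp
    moreover have "real (card {m-1..<2*n}) = real (2*n+1) - real m" using assms by (simp add: of_nat_diff)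
    ultimately show ?thesis by (simp add: sum_subtractf sum_distrib_left)
  qed
  also have "\<bar>\<dots>\<bar> \<le> (\<Sum>i\<in>{m-1..<2*n}. \<bar>2 * real (Acnt n i) - CC n\<bar>)" by (rule sum_abs)
  also have "\<dots> \<le> (\<Sum>i<2*n. \<bar>2 * real (Acnt n i) - CC n\<bar>)"
    by (rule sum_mono2) auto
  finally show ?thesis .
qed

lemma card_window:
  assumes "r < 2*n"
  shows "card {i. i < 2*n \<and> min i (2*n-1-i) \<le> r \<and> r < max i (2*n-1-i)} \<le> 2 * min (r+1) (2*n-r)"
proof -
  have "{i. i < 2*n \<and> min i (2*n-1-i) \<le> r \<and> r < max i (2*n-1-i)} \<subseteq>
        {..<min (r+1) (2*n-r)} \<union> {max (2*n-1-r) (r+1)..<2*n}"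
  proof
    fix i assume "i \<in> {i. i < 2*n \<and> min i (2*n-1-i) \<le> r \<and> r < max i (2*n-1-i)}"
    then have i: "i < 2*n" "min i (2*n-1-i) \<le> r" "r < max i (2*n-1-i)" by simp_all
    show "i \<in> {..<min (r+1) (2*n-r)} \<union> {max (2*n-1-r) (r+1)..<2*n}"
    proof (cases "i \<le> 2*n-1-i")
      case True
      then have "min i (2*n-1-i) = i" "max i (2*n-1-i) = 2*n-1-i" by auto
      then have "i < min (r+1) (2*n-r)" using i by linarith
      then show ?thesis by simp
    next
      case False
      then have "min i (2*n-1-i) = 2*n-1-i" "max i (2*n-1-i) = i" by auto
      then have "max (2*n-1-r) (r+1) \<le> i" using i by linarith
      then show ?thesis using i by simp
    qed
  qed
  then have "card {i. i < 2*n \<and> min i (2*n-1-i) \<le> r \<and> r < max i (2*n-1-i)} \<le>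
        card ({..<min (r+1) (2*n-r)} \<union> {max (2*n-1-r) (r+1)..<2*n})"
    by (intro card_mono) auto
  also have "\<dots> \<le> card {..<min (r+1) (2*n-r)} + card {max (2*n-1-r) (r+1)..<2*n}"
    by (rule card_Un_le)
  also have "\<dots> \<le> 2 * min (r+1) (2*n-r)"
  proof -
    have "card {max (2*n-1-r) (r+1)..<2*n} = 2*n - max (2*n-1-r) (r+1)" by simp
    also have "\<dots> \<le> min (r+1) (2*n-r)"
    proof -
      have h: "\<And>M. M \<ge> 2*n-1-r \<Longrightarrow> M \<ge> r+1 \<Longrightarrow> 2*n - M \<le> min (r+1) (2*n-r)" using assms by presburger
      show ?thesis by (rule h) simp_all
    qed
    finally have "card {max (2*n-1-r) (r+1)..<2*n} \<le> min (r+1) (2*n-r)" .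
    then show ?thesis by simp
  qed
  finally show ?thesis .
qed

lemma filt_ivl: "hi \<le> (N::nat) \<Longrightarrow> {r \<in> {..<N}. lo \<le> r \<and> r < hi} = {lo..<hi}"
  by auto

lemma filt_lt: "{i \<in> {..<N::nat}. P i} = {i. i < N \<and> P i}"
  by auto

lemma double_sum:
  "(\<Sum>i<2*n. (\<Sum>r\<in>{min i (2*n-1-i)..<max i (2*n-1-i)}. real (Zcnt n r)))
     \<le> (\<Sum>r<2*n. real (Zcnt n r) * real (2 * min (r+1) (2*n-r)))"
proof -
  have "(\<Sum>i<2*n. (\<Sum>r\<in>{min i (2*n-1-i)..<max i (2*n-1-i)}. real (Zcnt n r)))
      = (\<Sum>i<2*n. (\<Sum>r<2*n. (if min i (2*n-1-i) \<le> r \<and> r < max i (2*n-1-i) then real (Zcnt n r) else 0)))"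
  proof (rule sum.cong[OF refl])
    fix i assume i: "i \<in> {..<2*n}"
    have "max i (2*n-1-i) \<le> 2*n" using i by simp
    then have e: "{r \<in> {..<2*n}. min i (2*n-1-i) \<le> r \<and> r < max i (2*n-1-i)} = {min i (2*n-1-i)..<max i (2*n-1-i)}"
      by (rule filt_ivl)
    show "(\<Sum>r\<in>{min i (2*n-1-i)..<max i (2*n-1-i)}. real (Zcnt n r)) =
          (\<Sum>r<2*n. (if min i (2*n-1-i) \<le> r \<and> r < max i (2*n-1-i) then real (Zcnt n r) else 0))"
      using sum.inter_filter[of "{..<2*n}" "\<lambda>r. real (Zcnt n r)" "\<lambda>r. min i (2*n-1-i) \<le> r \<and> r < max i (2*n-1-i)"] e
      by simp
  qed
  also have "\<dots> = (\<Sum>r<2*n. (\<Sum>i<2*n. (if min i (2*n-1-i) \<le> r \<and> r < max i (2*n-1-i) then real (Zcnt n r) else 0)))"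
    by (rule sum.swap)
  also have "\<dots> = (\<Sum>r<2*n. real (Zcnt n r) * real (card {i. i < 2*n \<and> min i (2*n-1-i) \<le> r \<and> r < max i (2*n-1-i)}))"
  proof (rule sum.cong[OF refl])
    fix r assume "r \<in> {..<2*n}"
    have "(\<Sum>i<2*n. (if min i (2*n-1-i) \<le> r \<and> r < max i (2*n-1-i) then real (Zcnt n r) else 0))
        = (\<Sum>i\<in>{i. i < 2*n \<and> min i (2*n-1-i) \<le> r \<and> r < max i (2*n-1-i)}. real (Zcnt n r))"
      using sum.inter_filter[of "{..<2*n}" "\<lambda>r'. real (Zcnt n r)" "\<lambda>i. min i (2*n-1-i) \<le> r \<and> r < max i (2*n-1-i)"]
      by (simp only: filt_lt finite_lessThan simp_thms)
    also have "\<dots> = real (Zcnt n r) * real (card {i. i < 2*n \<and> min i (2*n-1-i) \<le> r \<and> r < max i (2*n-1-i)})"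
      by simp
    finally show "(\<Sum>i<2*n. (if min i (2*n-1-i) \<le> r \<and> r < max i (2*n-1-i) then real (Zcnt n r) else 0))
        = real (Zcnt n r) * real (card {i. i < 2*n \<and> min i (2*n-1-i) \<le> r \<and> r < max i (2*n-1-i)})" .
  qed
  also have "\<dots> \<le> (\<Sum>r<2*n. real (Zcnt n r) * real (2 * min (r+1) (2*n-r)))"
  proof (rule sum_mono)
    fix r assume "r \<in> {..<2*n}"
    then show "real (Zcnt n r) * real (card {i. i < 2*n \<and> min i (2*n-1-i) \<le> r \<and> r < max i (2*n-1-i)})
        \<le> real (Zcnt n r) * real (2 * min (r+1) (2*n-r))"
      using card_window[of r n] by (intro mult_left_mono) auto
  qed
  finally show ?thesis .
qed


lemma term_bound:
  assumes n: "n \<ge> 1" and r: "r < 2*n"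
  shows "real (Zcnt n r) * real (2 * min (r+1) (2*n-r)) \<le> 32 * CC n / sqrt (real (min (r+1) (2*n-r)))"
proof (cases "even r")
  case False
  have "Zcnt n r \<le> card (dyckL r) * card (dyckL (2*n - r))" using Zcnt_le r by simp
  then have "Zcnt n r = 0" using dyckL_odd[OF False] by simp
  then show ?thesis using cat_pos[of n] by (simp add: CC_def cat_card[of n, simplified])
next
  case True
  then obtain j where j: "r = 2*j" by blast
  have jn: "j < n" using r j by simp
  have "Zcnt n r \<le> card (dyckL (2*j)) * card (dyckL (2*(n-j)))"
    using Zcnt_le[of r n] r j by (simp add: diff_mult_distrib2)
  then have "real (Zcnt n r) \<le> cat j * cat (n-j)"
    by (metis cat_card of_nat_le_iff of_nat_mult)
  moreover have mm: "min (r+1) (2*n-r) = min (2*j+1) (2*n-2*j)" using j by simp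
  have "real (Zcnt n r) * real (2 * min (r+1) (2*n-r)) = real (Zcnt n r) * (2 * real (min (2*j+1) (2*n-2*j)))"
    using mm by simp
  also have "\<dots> \<le> cat j * cat (n-j) * (2 * real (min (2*j+1) (2*n-2*j)))"
    by (rule mult_right_mono) (use \<open>real (Zcnt n r) \<le> cat j * cat (n-j)\<close> in simp_all)
  also have "\<dots> \<le> 32 * cat n / sqrt (real (min (2*j+1) (2*n-2*j)))"
    using T_bound[OF n jn] by simp
  finally show ?thesis using mm cat_card[of n] by (simp add: CC_def)
qed

lemma sqrt_sum: "(\<Sum>r<N. 1 / sqrt (real r + 1)) \<le> 2 * sqrt (real N)"
proof (induction N)
  case 0 then show ?case by simp
next
  case (Suc N)
  have "1 / sqrt (real N + 1) \<le> 2 * sqrt (real N + 1) - 2 * sqrt (real N)"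
  proof -
    have a: "sqrt (real N + 1) > 0" by simp
    have "2 * sqrt (real N) * sqrt (real N + 1) \<le> 2 * real N + 1"
    proof -
      have "(2 * sqrt (real N) * sqrt (real N + 1))^2 = 4 * real N * (real N + 1)"
        by (simp add: power_mult_distrib)
      also have "\<dots> \<le> (2 * real N + 1)^2" by (simp add: power2_eq_square algebra_simps)
      finally show ?thesis by (rule power2_le_imp_le) simp
    qed
    then have "1 \<le> (2 * sqrt (real N + 1) - 2 * sqrt (real N)) * sqrt (real N + 1)"
      by (simp add: algebra_simps)
    then show ?thesis using a by (simp add: divide_le_eq)
  qed
  moreover have "(\<Sum>r<Suc N. 1 / sqrt (real r + 1)) = (\<Sum>r<N. 1 / sqrt (real r + 1)) + 1 / sqrt (real N + 1)"
    by simp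
  moreover have "sqrt (real (Suc N)) = sqrt (real N + 1)" by (simp add: add.commute)
  ultimately show ?case using Suc.IH by linarith
qed

lemma inv_sqrt_min: "a > 0 \<Longrightarrow> b > 0 \<Longrightarrow> 1 / sqrt (real (min a b)) \<le> 1 / sqrt (real a) + 1 / sqrt (real b)"
  by (cases "a \<le> b") (auto simp: min_def)

lemma sum_inv_sqrt_min: "(\<Sum>r<2*n. 1 / sqrt (real (min (r+1) (2*n-r)))) \<le> 4 * sqrt (2 * real n)"
proof -
  have "(\<Sum>r<2*n. 1 / sqrt (real (min (r+1) (2*n-r)))) \<le>
        (\<Sum>r<2*n. 1 / sqrt (real (r+1)) + 1 / sqrt (real (2*n-r)))"
  proof (rule sum_mono)
    fix r assume "r \<in> {..<2*n}"
    then show "1 / sqrt (real (min (r+1) (2*n-r))) \<le> 1 / sqrt (real (r+1)) + 1 / sqrt (real (2*n-r))"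
      by (intro inv_sqrt_min) auto
  qed
  also have "\<dots> = (\<Sum>r<2*n. 1 / sqrt (real r + 1)) + (\<Sum>r<2*n. 1 / sqrt (real (2*n-r)))"
    by (simp add: sum.distrib add.commute)
  also have "(\<Sum>r<2*n. 1 / sqrt (real (2*n-r))) = (\<Sum>r<2*n. 1 / sqrt (real r + 1))"
  proof -
    have "(\<Sum>r<2*n. 1 / sqrt (real (2*n-r))) = (\<Sum>r<2*n. (\<lambda>i. 1 / sqrt (real i + 1)) (2*n - Suc r))"
      by (rule sum.cong) (auto simp: of_nat_diff)
    also have "\<dots> = (\<Sum>r<2*n. 1 / sqrt (real r + 1))" by (rule sum.nat_diff_reindex)
    finally show ?thesis .
  qed
  also have "(\<Sum>r<2*n. 1 / sqrt (real r + 1)) + (\<Sum>r<2*n. 1 / sqrt (real r + 1)) \<le> 4 * sqrt (2 * real n)"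
    using sqrt_sum[of "2*n"] by simp
  finally show ?thesis .
qed

theorem hcoef_approx:
  assumes n: "n \<ge> 1" and m: "1 \<le> m" "m \<le> 2*n+1"
  shows "\<bar>2 * real (hcoef n m) - CC n * (real (2*n+1) - real m)\<bar> \<le> 128 * CC n * sqrt (2 * real n)"
proof -
  have "\<bar>2 * real (hcoef n m) - CC n * (real (2*n+1) - real m)\<bar> \<le> (\<Sum>i<2*n. \<bar>2 * real (Acnt n i) - CC n\<bar>)"
    by (rule hcoef_dev[OF m])
  also have "\<dots> \<le> (\<Sum>i<2*n. (\<Sum>r\<in>{min i (2*n-1-i)..<max i (2*n-1-i)}. real (Zcnt n r)))"
    by (rule sum_mono) (rule b_bound, simp)
  also have "\<dots> \<le> (\<Sum>r<2*n. real (Zcnt n r) * real (2 * min (r+1) (2*n-r)))"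
    by (rule double_sum)
  also have "\<dots> \<le> (\<Sum>r<2*n. 32 * CC n * (1 / sqrt (real (min (r+1) (2*n-r)))))"
    by (rule sum_mono) (use term_bound[OF n] in simp)
  also have "\<dots> = 32 * CC n * (\<Sum>r<2*n. 1 / sqrt (real (min (r+1) (2*n-r))))"
    by (simp add: sum_distrib_left)
  also have "\<dots> \<le> 32 * CC n * (4 * sqrt (2 * real n))"
    by (rule mult_left_mono[OF sum_inv_sqrt_min]) (simp add: CC_def)
  finally show ?thesis by simp
qed




lemma hcoef_big: "m > 2*n \<Longrightarrow> hcoef n m = 0"
  unfolding hcoef_def by (auto intro!: card_eq_0_iff[THEN iffD2] simp: Collect_empty_eq) 

lemma sets_Ylaw[simp]: "sets (Ylaw n) = UNIV"
  by (simp add: Ylaw_def)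

lemma emeasure_Ylaw:
  "emeasure (Ylaw n) A = ennreal ((\<Sum>m\<le>2*n. real (hcoef n m) * indicator A m) / real (htot n))"
proof -
  have "emeasure (Ylaw n) A = (\<integral>\<^sup>+ m. ennreal (real (hcoef n m) / real (htot n)) * indicator A m \<partial>count_space UNIV)"
    unfolding Ylaw_def by (rule emeasure_density) auto
  also have "\<dots> = (\<Sum>m\<le>2*n. ennreal (real (hcoef n m) / real (htot n)) * indicator A m)"
    by (rule nn_integral_count_space') (auto simp: hcoef_big)
  also have "\<dots> = (\<Sum>m\<le>2*n. ennreal (real (hcoef n m) / real (htot n) * indicator A m))"
    by (rule sum.cong) (auto simp: ennreal_mult indicator_def)
  also have "\<dots> = ennreal (\<Sum>m\<le>2*n. real (hcoef n m) / real (htot n) * indicator A m)"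
    by (rule sum_ennreal) auto
  also have "(\<Sum>m\<le>2*n. real (hcoef n m) / real (htot n) * indicator A m) = (\<Sum>m\<le>2*n. real (hcoef n m) * indicator A m) / real (htot n)"
    unfolding sum_divide_distrib by (rule sum.cong) simp_all
  finally show ?thesis .
qed

lemma measure_Ylaw:
  "measure (Ylaw n) A = (\<Sum>m\<le>2*n. real (hcoef n m) * indicator A m) / real (htot n)"
  unfolding measure_def emeasure_Ylaw by (rule enn2real_ennreal) (auto intro!: sum_nonneg divide_nonneg_nonneg)

lemma htot_pos: "n \<ge> 1 \<Longrightarrow> htot n > 0"
proof -
  assume n: "n \<ge> 1"
  have "hcoef n 1 = (\<Sum>i\<in>{0..<2*n}. Acnt n i)" using hcoef_sum[of 1 n] by simp
  also have "\<dots> \<ge> (\<Sum>i\<in>{0, 2*n-1}. Acnt n i)" by (rule sum_mono2) (use n in auto)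
  also have "(\<Sum>i\<in>{0, 2*n-1}. Acnt n i) = Acnt n 0 + Acnt n (2*n-1-0)" using n by simp
  also have "\<dots> = card (dyckL (2*n))" by (rule Acnt_sym) (use n in simp)
  finally have "hcoef n 1 \<ge> card (dyckL (2*n))" .
  moreover have "card (dyckL (2*n)) > 0" using cat_card[of n] cat_pos[of n] by simp
  ultimately have "hcoef n 1 > 0" by simp
  moreover have "hcoef n 1 \<le> htot n" unfolding htot_def by (rule member_le_sum) (use n in auto)
  ultimately show ?thesis by simp
qed

lemma prob_Ylaw: assumes "n \<ge> 1" shows "prob_space (Ylaw n)"
proof
  have sp: "space (Ylaw n) = UNIV" by (simp add: Ylaw_def)
  have "emeasure (Ylaw n) (space (Ylaw n)) = ennreal ((\<Sum>m\<le>2*n. real (hcoef n m) * indicator UNIV m) / real (htot n))"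
    unfolding sp by (rule emeasure_Ylaw)
  also have "\<dots> = ennreal ((\<Sum>m\<le>2*n. real (hcoef n m)) / real (htot n))" by simp
  also have "\<dots> = 1"
  proof -
    have "(\<Sum>m\<le>2*n. real (hcoef n m)) = real (htot n)" by (simp add: htot_def)
    then show ?thesis using htot_pos[OF assms] by simp
  qed
  finally show "emeasure (Ylaw n) (space (Ylaw n)) = 1" .
qed

lemma real_dist_Yscaled: "n \<ge> 1 \<Longrightarrow> real_distribution (Yscaled_law n)"
proof -
  assume n: "n \<ge> 1"
  interpret prob_space "Ylaw n" by (rule prob_Ylaw[OF n])
  show ?thesis unfolding Yscaled_law_def
    by (rule real_distribution_distr) (simp add: Ylaw_def)
qed

lemma cdf_Yscaled:
  "cdf (Yscaled_law n) x = (\<Sum>m\<le>2*n. real (hcoef n m) * indicator {m. real m / (2 * real n) \<le> x} m) / real (htot n)"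
proof -
  have "cdf (Yscaled_law n) x = measure (Yscaled_law n) {..x}" by (rule cdf_def2)
  also have "\<dots> = measure (Ylaw n) ((\<lambda>m. real m / (2 * real n)) -` {..x} \<inter> space (Ylaw n))"
    unfolding Yscaled_law_def by (rule measure_distr) (auto simp: Ylaw_def)
  also have "(\<lambda>m. real m / (2 * real n)) -` {..x} \<inter> space (Ylaw n) = {m. real m / (2 * real n) \<le> x}"
    by (auto simp: Ylaw_def)
  finally show ?thesis by (simp add: measure_Ylaw)
qed


lemma emeasure_beta12:
  assumes [measurable]: "A \<in> sets borel"
  shows "emeasure beta12 A = (\<integral>\<^sup>+ y. ennreal (indicator {0..1} y * (2 * (1 - y))) * indicator A y \<partial>lborel)"
  unfolding beta12_def by (rule emeasure_density) auto

lemma beta_FTC: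
  assumes "0 \<le> b" "b \<le> 1"
  shows "(\<integral>\<^sup>+ y. ennreal (2 * (1 - y)) * indicator {0..b} y \<partial>lborel) = ennreal (2 * b - b^2)"
proof -
  have "(\<integral>\<^sup>+ y. ennreal (2 * (1 - y)) * indicator {0..b} y \<partial>lborel) = ennreal ((2 * b - b^2) - (2 * 0 - 0^2))"
  proof (rule nn_integral_FTC_Icc)
    show "(\<lambda>y::real. 2 * (1 - y)) \<in> borel_measurable borel" by measurable
    fix x :: real assume x: "x \<in> {0..b}"
    show "((\<lambda>y. 2 * y - y^2) has_real_derivative 2 * (1 - x)) (at x)"
      by (auto intro!: derivative_eq_intros simp: algebra_simps)
    show "0 \<le> 2 * (1 - x)" using x assms by auto
  qed (use assms in auto)
  then show ?thesis by simp
qed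

definition Gb :: "real \<Rightarrow> real" where
  "Gb x = (if x < 0 then 0 else if x \<le> 1 then 2 * x - x^2 else 1)"

lemma emeasure_beta12_atMost: "emeasure beta12 {..x} = ennreal (Gb x)"
proof -
  have e: "emeasure beta12 {..x} = (\<integral>\<^sup>+ y. ennreal (indicator {0..1} y * (2 * (1 - y))) * indicator {..x} y \<partial>lborel)"
    by (rule emeasure_beta12) simp
  consider "x < 0" | "0 \<le> x" "x \<le> 1" | "x > 1" by linarith
  then show ?thesis
  proof cases
    case 1
    have "(\<integral>\<^sup>+ y. ennreal (indicator {0..1} y * (2 * (1 - y))) * indicator {..x} y \<partial>lborel) = (\<integral>\<^sup>+ y. 0 \<partial>(lborel::real measure))"
      using 1 by (intro nn_integral_cong) (auto simp: indicator_def)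
    then show ?thesis using e 1 by (simp add: Gb_def)
  next
    case 2
    have "(\<integral>\<^sup>+ y. ennreal (indicator {0..1} y * (2 * (1 - y))) * indicator {..x} y \<partial>lborel) =
          (\<integral>\<^sup>+ y. ennreal (2 * (1 - y)) * indicator {0..x} y \<partial>lborel)"
      using 2 by (intro nn_integral_cong) (auto simp: indicator_def)
    then show ?thesis using e 2 beta_FTC[of x] by (simp add: Gb_def)
  next
    case 3
    have "(\<integral>\<^sup>+ y. ennreal (indicator {0..1} y * (2 * (1 - y))) * indicator {..x} y \<partial>lborel) =
          (\<integral>\<^sup>+ y. ennreal (2 * (1 - y)) * indicator {0..1} y \<partial>lborel)"
      using 3 by (intro nn_integral_cong) (auto simp: indicator_def)
    then show ?thesis using e 3 beta_FTC[of 1] by (simp add: Gb_def)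
  qed
qed

lemma Gb_nonneg: "Gb x \<ge> 0"
proof -
  have "0 \<le> x \<Longrightarrow> x \<le> 1 \<Longrightarrow> 0 \<le> 2 * x - x^2"
    by (simp add: power2_eq_square) (metis mult_right_mono mult_2 add_increasing2 le_add_same_cancel1 order_trans mult_left_le_one_le)
  then show ?thesis by (auto simp: Gb_def)
qed

lemma cdf_beta12: "cdf beta12 x = Gb x"
  by (simp add: cdf_def2 measure_def emeasure_beta12_atMost Gb_nonneg)

lemma prob_beta12: "prob_space beta12"
proof
  have "emeasure beta12 (space beta12) = (\<integral>\<^sup>+ y. ennreal (indicator {0..1} y * (2 * (1 - y))) * indicator UNIV y \<partial>lborel)"
    by (subst emeasure_beta12[symmetric]) (auto simp: beta12_def)
  also have "\<dots> = (\<integral>\<^sup>+ y. ennreal (2 * (1 - y)) * indicator {0..1} y \<partial>lborel)"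
    by (intro nn_integral_cong) (auto simp: indicator_def)
  also have "\<dots> = 1" using beta_FTC[of 1] by simp
  finally show "emeasure beta12 (space beta12) = 1" .
qed

lemma real_dist_beta12: "real_distribution beta12"
  unfolding real_distribution_def real_distribution_axioms_def
  using prob_beta12 by (simp add: beta12_def)

lemma beta12_moment: "integral\<^sup>L beta12 (\<lambda>y. y ^ r) = 2 / ((real r + 1) * (real r + 2))"
proof -
  have "integral\<^sup>L beta12 (\<lambda>y. y ^ r) = (\<integral>y. (indicator {0..1} y * (2 * (1 - y))) *\<^sub>R y ^ r \<partial>lborel)"
    unfolding beta12_def by (rule integral_density) (auto simp: indicator_def)
  also have "\<dots> = (\<integral>y. (2 * (1 - y) * y ^ r) * indicator {0..1} y \<partial>lborel)"
    by (rule Bochner_Integration.integral_cong) (auto simp: indicator_def)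
  also have "\<dots> = (2 / (real r + 1) * 1 ^ (r+1) - 2 / (real r + 2) * 1 ^ (r+2)) -
                  (2 / (real r + 1) * 0 ^ (r+1) - 2 / (real r + 2) * 0 ^ (r+2))"
  proof (rule integral_FTC_Icc_real)
    fix x :: real
    have p1: "((\<lambda>y. y^(r+1)) has_real_derivative real (r+1) * x^r) (at x)" using DERIV_pow[of "r+1" x] by simp
    have p2: "((\<lambda>y. y^(r+2)) has_real_derivative real (r+2) * x^(r+1)) (at x)" using DERIV_pow[of "r+2" x] by simp
    have "((\<lambda>y. 2 / (real r + 1) * y ^ (r+1) - 2 / (real r + 2) * y ^ (r+2)) has_real_derivative
           2 / (real r + 1) * (real (r+1) * x^r) - 2 / (real r + 2) * (real (r+2) * x^(r+1))) (at x)"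
      by (intro DERIV_diff DERIV_cmult p1 p2)
    moreover have "2 / (real r + 1) * (real (r+1) * x^r) - 2 / (real r + 2) * (real (r+2) * x^(r+1)) = 2 * (1 - x) * x ^ r"
    proof -
      have "2 / (real r + 1) * (real (r+1) * x^r) = 2 * x^r" by (simp add: add.commute)
      moreover have "2 / (real r + 2) * (real (r+2) * x^(r+1)) = 2 * x^(r+1)" by (simp add: add.commute)
      ultimately show ?thesis by (simp add: algebra_simps)
    qed
    ultimately show "((\<lambda>y. 2 / (real r + 1) * y ^ (r+1) - 2 / (real r + 2) * y ^ (r+2)) has_real_derivative 2 * (1 - x) * x ^ r) (at x)"
      by (rule DERIV_cong)
    show "isCont (\<lambda>y. 2 * (1 - y) * y ^ r) x" by (intro continuous_intros)
  qed simp
  also have "\<dots> = 2 / ((real r + 1) * (real r + 2))"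
  proof -
    have "2 / (real r + 1) - 2 / (real r + 2) = 2 / ((real r + 1) * (real r + 2))"
      by (simp add: field_simps)
    then show ?thesis by simp
  qed
  finally show ?thesis .
qed




definition hsum :: "nat \<Rightarrow> nat \<Rightarrow> real" where
  "hsum N K = (\<Sum>m\<le>K. real (hcoef N m))"

lemma CC_pos: "CC n > 0"
  using cat_card[of n] cat_pos[of n] by (simp add: CC_def)

lemma hsum_approx:
  assumes N: "N \<ge> 1"
  shows "K \<le> 2*N \<Longrightarrow> \<bar>2 * hsum N K - CC N * real K * (4 * real N + 1 - real K) / 2\<bar> \<le> real K * (128 * CC N * sqrt (2 * real N))"
proof (induction K)
  case 0 then show ?case by (simp add: hsum_def hcoef_0)
next
  case (Suc K)
  have IH: "\<bar>2 * hsum N K - CC N * real K * (4 * real N + 1 - real K) / 2\<bar> \<le> real K * (128 * CC N * sqrt (2 * real N))"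
    using Suc by simp
  have h: "\<bar>2 * real (hcoef N (Suc K)) - CC N * (real (2*N+1) - real (Suc K))\<bar> \<le> 128 * CC N * sqrt (2 * real N)"
    by (rule hcoef_approx) (use N Suc.prems in auto)
  have e1: "hsum N (Suc K) = hsum N K + real (hcoef N (Suc K))" by (simp add: hsum_def)
  have e2: "CC N * real (Suc K) * (4 * real N + 1 - real (Suc K)) / 2 =
            CC N * real K * (4 * real N + 1 - real K) / 2 + CC N * (real (2*N+1) - real (Suc K))"
    by (simp add: field_simps)
  have "2 * hsum N (Suc K) - CC N * real (Suc K) * (4 * real N + 1 - real (Suc K)) / 2
      = (2 * hsum N K - CC N * real K * (4 * real N + 1 - real K) / 2) +
        (2 * real (hcoef N (Suc K)) - CC N * (real (2*N+1) - real (Suc K)))"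
    unfolding e1 e2 by simp
  then have "\<bar>2 * hsum N (Suc K) - CC N * real (Suc K) * (4 * real N + 1 - real (Suc K)) / 2\<bar>
      \<le> \<bar>2 * hsum N K - CC N * real K * (4 * real N + 1 - real K) / 2\<bar> +
        \<bar>2 * real (hcoef N (Suc K)) - CC N * (real (2*N+1) - real (Suc K))\<bar>"
    by (simp only: abs_triangle_ineq)
  also have "\<dots> \<le> real K * (128 * CC N * sqrt (2 * real N)) + 128 * CC N * sqrt (2 * real N)"
    using IH h by linarith
  also have "\<dots> = real (Suc K) * (128 * CC N * sqrt (2 * real N))" by (simp add: algebra_simps)
  finally show ?case .
qed


lemma norm_diff_bound:
  assumes N: "N \<ge> 1" and K: "K \<le> 2*N"
  shows "\<bar>hsum N K / (CC N * real N ^ 2) - (real K / real N) * (4 + 1 / real N - real K / real N) / 4\<bar>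
         \<le> 128 * sqrt (2 * real N) / real N"
proof -
  define C where "C = CC N"
  define M where "M = C * real K * (4 * real N + 1 - real K) / 2"
  have C: "C > 0" using CC_pos by (simp add: C_def)
  have Np: "real N > 0" using N by simp
  have b: "(real K / real N) * (4 + 1 / real N - real K / real N) / 4 = M / (2 * C * real N ^ 2)"
    unfolding M_def using C Np by (simp add: field_simps power2_eq_square)
  have a: "hsum N K / (C * real N ^ 2) = 2 * hsum N K / (2 * C * real N ^ 2)" by simp
  have "\<bar>hsum N K / (C * real N ^ 2) - M / (2 * C * real N ^ 2)\<bar> = \<bar>2 * hsum N K - M\<bar> / (2 * C * real N ^ 2)"
  proof -
    have "hsum N K / (C * real N ^ 2) - M / (2 * C * real N ^ 2) = (2 * hsum N K - M) / (2 * C * real N ^ 2)"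
      using C Np by (simp add: field_simps)
    moreover have "\<bar>2 * C * real N ^ 2\<bar> = 2 * C * real N ^ 2" using C by simp
    ultimately show ?thesis by (simp add: abs_divide)
  qed
  also have "\<dots> \<le> real K * (128 * C * sqrt (2 * real N)) / (2 * C * real N ^ 2)"
    using hsum_approx[OF N K] C Np unfolding M_def C_def by (intro divide_right_mono) auto
  also have "\<dots> = 64 * real K * sqrt (2 * real N) / real N ^ 2" using C by (simp add: field_simps)
  also have "\<dots> \<le> 64 * (2 * real N) * sqrt (2 * real N) / real N ^ 2"
    using K by (intro divide_right_mono mult_right_mono) auto
  also have "\<dots> = 128 * sqrt (2 * real N) / real N" using Np by (simp add: field_simps power2_eq_square)
  finally show ?thesis unfolding b C_def .
qed

lemma lim_general:
  fixes K :: "nat \<Rightarrow> nat"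
  assumes K: "\<And>N. N \<ge> 1 \<Longrightarrow> K N \<le> 2*N" and t: "(\<lambda>N. real (K N) / real N) \<longlonglongrightarrow> t"
  shows "(\<lambda>N. hsum N (K N) / (CC N * real N ^ 2)) \<longlonglongrightarrow> t * (4 - t) / 4"
proof -
  define b where "b N = (real (K N) / real N) * (4 + 1 / real N - real (K N) / real N) / 4" for N
  have inv: "(\<lambda>N. 1 / real N) \<longlonglongrightarrow> 0" by real_asymp
  have bl: "b \<longlonglongrightarrow> t * (4 + 0 - t) / 4"
    unfolding b_def by (intro tendsto_intros t inv) simp
  have e: "(\<lambda>N. 128 * sqrt (2 * real N) / real N) \<longlonglongrightarrow> 0" by real_asymp
  have d: "(\<lambda>N. hsum N (K N) / (CC N * real N ^ 2) - b N) \<longlonglongrightarrow> 0"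
  proof (rule Lim_null_comparison[OF _ e])
    show "\<forall>\<^sub>F N in sequentially. norm (hsum N (K N) / (CC N * real N ^ 2) - b N) \<le> 128 * sqrt (2 * real N) / real N"
      using eventually_ge_at_top[of 1]
      by eventually_elim (use norm_diff_bound K in \<open>auto simp: b_def\<close>)
  qed
  have "(\<lambda>N. (hsum N (K N) / (CC N * real N ^ 2) - b N) + b N) \<longlonglongrightarrow> 0 + t * (4 + 0 - t) / 4"
    by (intro tendsto_add d bl)
  then show ?thesis by simp
qed


lemma le_nat_floor_iff: "y \<ge> 0 \<Longrightarrow> (m \<le> nat \<lfloor>y\<rfloor> \<longleftrightarrow> real m \<le> y)"
proof -
  assume y: "y \<ge> 0"
  then have "\<lfloor>y\<rfloor> \<ge> 0" by simp
  then have "m \<le> nat \<lfloor>y\<rfloor> \<longleftrightarrow> int m \<le> \<lfloor>y\<rfloor>" by (simp add: le_nat_iff)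
  also have "\<dots> \<longleftrightarrow> of_int (int m) \<le> y" by (rule le_floor_iff)
  finally show ?thesis by simp
qed

lemma div_div_cancel: "(c::real) \<noteq> 0 \<Longrightarrow> (a / c) / (b / c) = a / b"
  by (cases "b = 0") (simp_all add: field_simps)

lemma htot_hsum: "real (htot N) = hsum N (2*N)"
  by (simp add: htot_def hsum_def)

lemma cdf_conv: "(\<lambda>N. cdf (Yscaled_law N) x) \<longlonglongrightarrow> Gb x"
proof -
  consider "x < 0" | "x \<ge> 1" | "0 \<le> x" "x < 1" by linarith
  then show ?thesis
  proof cases
    case 1
    have "cdf (Yscaled_law N) x = 0" for N
    proof -
      have E: "{m::nat. real m / (2 * real N) \<le> x} = {}"
      proof -
        { fix m :: nat
          have "real m / (2 * real N) \<ge> 0" by simp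
          then have "\<not> real m / (2 * real N) \<le> x" using 1 by linarith }
        then show ?thesis by auto
      qed
      have "(\<Sum>m\<le>2*N. real (hcoef N m) * indicator {m. real m / (2 * real N) \<le> x} m) = 0"
        unfolding E by simp
      then show ?thesis by (simp add: cdf_Yscaled)
    qed
    then show ?thesis using 1 by (simp add: Gb_def)
  next
    case 2
    have "\<forall>\<^sub>F N in sequentially. cdf (Yscaled_law N) x = 1"
      using eventually_ge_at_top[of 1]
    proof eventually_elim
      case (elim N)
      have "(\<Sum>m\<le>2*N. real (hcoef N m) * indicator {m. real m / (2 * real N) \<le> x} m) = (\<Sum>m\<le>2*N. real (hcoef N m))"
      proof (rule sum.cong[OF refl])
        fix m assume "m \<in> {..2*N}"
        then have "real m / (2 * real N) \<le> 1" using elim by (simp add: divide_le_eq)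
        then show "real (hcoef N m) * indicator {m. real m / (2 * real N) \<le> x} m = real (hcoef N m)"
          using 2 by (simp add: indicator_def)
      qed
      moreover have "(\<Sum>m\<le>2*N. real (hcoef N m)) = real (htot N)" by (simp add: htot_def)
      moreover have "real (htot N) > 0" using htot_pos[OF elim] by simp
      ultimately show ?case unfolding cdf_Yscaled by simp
    qed
    moreover have "Gb x = 1" using 2 by (simp add: Gb_def)
    ultimately show ?thesis by (simp add: tendsto_eventually)
  next
    case 3
    define K where "K N = nat \<lfloor>2 * real N * x\<rfloor>" for N
    have K2: "K N \<le> 2*N" if "N \<ge> 1" for N
    proof -
      have "real (K N) \<le> 2 * real N * x" using 3 by (simp add: K_def of_nat_floor)
      moreover have "2 * real N * x \<le> 2 * real N" using 3 by (simp add: mult_left_le)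
      ultimately have "real (K N) \<le> real (2*N)" by simp
      then show ?thesis by (simp only: of_nat_le_iff)
    qed
    have Kt: "(\<lambda>N. real (K N) / real N) \<longlonglongrightarrow> 2 * x"
    proof (rule tendsto_sandwich[where f = "\<lambda>N. 2 * x - 1 / real N" and h = "\<lambda>N. 2 * x"])
      show "\<forall>\<^sub>F N in sequentially. 2 * x - 1 / real N \<le> real (K N) / real N"
        using eventually_ge_at_top[of 1]
      proof eventually_elim
        case (elim N)
        have "real (K N) = of_int \<lfloor>2 * real N * x\<rfloor>" using 3 by (simp add: K_def)
        moreover have "2 * real N * x - 1 \<le> of_int \<lfloor>2 * real N * x\<rfloor>" by linarith
        ultimately have k: "2 * real N * x - 1 \<le> real (K N)" by simp
        have "2 * x - 1 / real N = (2 * real N * x - 1) / real N" using elim by (simp add: field_simps)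
        also have "\<dots> \<le> real (K N) / real N" by (rule divide_right_mono) (use k in auto)
        finally show ?case .
      qed
      show "\<forall>\<^sub>F N in sequentially. real (K N) / real N \<le> 2 * x"
        using eventually_ge_at_top[of 1]
      proof eventually_elim
        case (elim N)
        have "real (K N) \<le> 2 * real N * x" using 3 by (simp add: K_def of_nat_floor)
        then show ?case using elim by (simp add: field_simps)
      qed
      have "(\<lambda>N. 2 * x - 1 / real N) \<longlonglongrightarrow> 2 * x - 0" by real_asymp
      then show "(\<lambda>N. 2 * x - 1 / real N) \<longlonglongrightarrow> 2 * x" by simp
    qed simp
    have L1: "(\<lambda>N. hsum N (K N) / (CC N * real N ^ 2)) \<longlonglongrightarrow> 2 * x * (4 - 2 * x) / 4"
      by (rule lim_general[OF K2 Kt])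
    have L2: "(\<lambda>N. hsum N (2*N) / (CC N * real N ^ 2)) \<longlonglongrightarrow> 2 * (4 - 2) / 4"
    proof (rule lim_general)
      show "(\<lambda>N. real (2*N) / real N) \<longlonglongrightarrow> 2"
      proof (rule Lim_transform_eventually)
        show "\<forall>\<^sub>F N in sequentially. 2 = real (2*N) / real N"
          using eventually_ge_at_top[of 1] by eventually_elim simp
      qed simp
    qed simp
    have L: "(\<lambda>N. (hsum N (K N) / (CC N * real N ^ 2)) / (hsum N (2*N) / (CC N * real N ^ 2)))
             \<longlonglongrightarrow> (2 * x * (4 - 2 * x) / 4) / (2 * (4 - 2) / 4)"
      by (rule tendsto_divide[OF L1 L2]) simp
    have "\<forall>\<^sub>F N in sequentially. (hsum N (K N) / (CC N * real N ^ 2)) / (hsum N (2*N) / (CC N * real N ^ 2)) = cdf (Yscaled_law N) x"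
      using eventually_ge_at_top[of 1]
    proof eventually_elim
      case (elim N)
      have Cp: "CC N * real N ^ 2 > 0" using CC_pos elim by simp
      have "(\<Sum>m\<le>2*N. real (hcoef N m) * indicator {m. real m / (2 * real N) \<le> x} m) = hsum N (K N)"
      proof -
        have "(\<Sum>m\<le>2*N. real (hcoef N m) * indicator {m. real m / (2 * real N) \<le> x} m)
            = (\<Sum>m\<in>{..2*N} \<inter> {m. real m / (2 * real N) \<le> x}. real (hcoef N m))"
          by (simp add: sum.inter_restrict[symmetric] indicator_def mult.commute)
        also have "{..2*N} \<inter> {m. real m / (2 * real N) \<le> x} = {..K N}"
        proof -
          have "real m / (2 * real N) \<le> x \<longleftrightarrow> m \<le> K N" for m
            using elim 3 by (simp add: K_def le_nat_floor_iff divide_le_eq mult.commute mult.left_commute)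
          then show ?thesis using K2[OF elim] by auto
        qed
        finally show ?thesis by (simp add: hsum_def)
      qed
      moreover have "(hsum N (K N) / (CC N * real N ^ 2)) / (hsum N (2*N) / (CC N * real N ^ 2)) = hsum N (K N) / hsum N (2*N)"
        using Cp by (rule div_div_cancel[OF less_imp_neq[symmetric]])
      ultimately show ?case by (simp add: cdf_Yscaled htot_hsum)
    qed
    then have "(\<lambda>N. cdf (Yscaled_law N) x) \<longlonglongrightarrow> (2 * x * (4 - 2 * x) / 4) / (2 * (4 - 2) / 4)"
      using L by (rule Lim_transform_eventually[rotated])
    moreover have "(2 * x * (4 - 2 * x) / 4) / (2 * (4 - 2) / 4) = Gb x"
      using 3 by (simp add: Gb_def power2_eq_square field_simps)
    ultimately show ?thesis by simp
  qed
qed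


definition clampf :: "nat \<Rightarrow> real \<Rightarrow> real" where
  "clampf r y = (max 0 (min 1 y)) ^ r"

lemma clampf_cont: "isCont (clampf r) x"
  unfolding clampf_def by (intro continuous_intros)

lemma clampf_bdd: "norm (clampf r x) \<le> 1"
proof -
  have "0 \<le> max 0 (min 1 x)" "max 0 (min 1 x) \<le> 1" by auto
  then have "\<bar>max 0 (min 1 x) ^ r\<bar> \<le> 1" by (simp add: power_le_one)
  then show ?thesis by (simp add: clampf_def)
qed

lemma weak_conv_main: "weak_conv_m (\<lambda>n. Yscaled_law (Suc n)) beta12"
  unfolding weak_conv_m_def weak_conv_def cdf_beta12
  using LIMSEQ_Suc[OF cdf_conv] by blast

lemma moment_Y_clamp:
  assumes N: "N \<ge> 1"
  shows "integral\<^sup>L (Yscaled_law N) (\<lambda>y. y ^ r) = integral\<^sup>L (Yscaled_law N) (clampf r)"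
proof -
  let ?g = "\<lambda>m::nat. real m / (2 * real N)"
  have meas: "?g \<in> measurable (Ylaw N) borel" by (simp add: Ylaw_def)
  have "integral\<^sup>L (Yscaled_law N) (\<lambda>y. y ^ r) = integral\<^sup>L (Ylaw N) (\<lambda>m. ?g m ^ r)"
    unfolding Yscaled_law_def by (rule integral_distr[OF meas]) simp
  also have "\<dots> = integral\<^sup>L (Ylaw N) (\<lambda>m. clampf r (?g m))"
  proof (rule integral_cong_AE)
    show "(\<lambda>m. ?g m ^ r) \<in> borel_measurable (Ylaw N)" by (simp add: Ylaw_def)
    show "(\<lambda>m. clampf r (?g m)) \<in> borel_measurable (Ylaw N)" by (simp add: Ylaw_def)
    have pos: "m \<le> 2*N" if "0 < ennreal (real (hcoef N m) / real (htot N))" for m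
    proof (rule ccontr)
      assume "\<not> m \<le> 2*N"
      then have "hcoef N m = 0" by (intro hcoef_big) simp
      then show False using that by simp
    qed
    have "AE m in Ylaw N. m \<le> 2*N"
      unfolding Ylaw_def by (subst AE_density) (auto simp: AE_count_space intro: pos)
    then show "AE m in Ylaw N. ?g m ^ r = clampf r (?g m)"
    proof (rule AE_mp, intro AE_I2 impI)
      fix m assume "m \<le> 2*N"
      then have "?g m \<le> 1" "0 \<le> ?g m" using N by (auto simp: divide_le_eq)
      then show "?g m ^ r = clampf r (?g m)" by (simp add: clampf_def)
    qed
  qed
  also have "\<dots> = integral\<^sup>L (Yscaled_law N) (clampf r)"
    unfolding Yscaled_law_def by (rule integral_distr[OF meas, symmetric]) (unfold clampf_def[abs_def], measurable)
  finally show ?thesis .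
qed

lemma moment_beta_clamp:
  "integral\<^sup>L beta12 (\<lambda>y. y ^ r) = integral\<^sup>L beta12 (clampf r)"
proof (rule integral_cong_AE)
  show "(\<lambda>y. y ^ r) \<in> borel_measurable beta12" by (simp add: beta12_def)
  show "clampf r \<in> borel_measurable beta12" unfolding beta12_def clampf_def[abs_def] by measurable
  have "AE y in beta12. y \<in> {0..1}"
    unfolding beta12_def by (subst AE_density) (auto simp: indicator_def)
  then show "AE y in beta12. y ^ r = clampf r y"
    by (rule AE_mp) (auto simp: clampf_def)
qed

theorem theorem18:
  shows "weak_conv_m (\<lambda>n. Yscaled_law (Suc n)) beta12 \<and>
         (\<forall>r::nat. (\<lambda>n. integral\<^sup>L (Yscaled_law (Suc n)) (\<lambda>y. y ^ r))
                     \<longlonglongrightarrow> integral\<^sup>L beta12 (\<lambda>y. y ^ r)) \<and>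
         (\<forall>r::nat. integral\<^sup>L beta12 (\<lambda>y. y ^ r) = 2 / ((real r + 1) * (real r + 2)))"
proof (intro conjI allI)
  show "weak_conv_m (\<lambda>n. Yscaled_law (Suc n)) beta12" by (rule weak_conv_main)
next
  fix r :: nat
  have "(\<lambda>n. integral\<^sup>L (Yscaled_law (Suc n)) (clampf r)) \<longlonglongrightarrow> integral\<^sup>L beta12 (clampf r)"
  proof (rule weak_conv_imp_integral_bdd_continuous_conv[where B = 1])
    show "\<And>n. real_distribution (Yscaled_law (Suc n))" by (rule real_dist_Yscaled) simp
    show "real_distribution beta12" by (rule real_dist_beta12)
    show "weak_conv_m (\<lambda>n. Yscaled_law (Suc n)) beta12" by (rule weak_conv_main)
    show "\<And>x. isCont (clampf r) x" by (rule clampf_cont)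
    show "\<And>x. norm (clampf r x) \<le> 1" by (rule clampf_bdd)
  qed
  then show "(\<lambda>n. integral\<^sup>L (Yscaled_law (Suc n)) (\<lambda>y. y ^ r)) \<longlonglongrightarrow> integral\<^sup>L beta12 (\<lambda>y. y ^ r)"
    by (simp add: moment_Y_clamp moment_beta_clamp)
next
  fix r :: nat
  show "integral\<^sup>L beta12 (\<lambda>y. y ^ r) = 2 / ((real r + 1) * (real r + 2))" by (rule beta12_moment)
qed


end
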